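(* Suppose $\mathrm r(R)=2$. The following are equivalent: (1) $R$ is a $2$-AGL ring; (2) $\mathfrak c=R:K$ and $\ell_R(K/R)=2$; (3) $S=K^2$ and $\ell_R(K/R)=2$. When these hold, $K/R\cong R/\mathfrak c$ as $R$-modules.
   Context: Let $(R,\mathfrak m)$ be a one-dimensional Cohen–Macaulay local ring possessing a canonical module $\mathrm K_R$; $I\neq R$ an ideal with $I\cong\mathrm K_R$ containing a parameter ideal $Q=(a)$ as a reduction. In the total ring of fractions set $K=I/a$, $S=R[K]$, $\mathfrak c=R:S$, with $X:Y=\{z:zY\subseteq X\}$. $R$ is $2$-AGL if $\operatorname{rank}\mathcal S_Q(I)=2$, where $\mathcal S_Q(I)=IR[It]/IR[Qt]$ is the Sally module and its rank is its length at $\mathfrak mR[Qt]$; equivalently $\ell_R(S/K)=2$. $\mathrm r(R)$ is the Cohen–Macaulay type. *)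

theory Defs
  imports Main "HOL-Library.Extended_Nat"
begin

text \<open>Setting: the ambient commutative ring 'a plays the role of the total ring of
fractions Q(R); R is a subring of it. Modules are R-submodules of Q(R).\<close>

definition subring :: "'a::comm_ring_1 set \<Rightarrow> bool" where
  "subring R \<longleftrightarrow> 0 \<in> R \<and> 1 \<in> R \<and> (\<forall>x\<in>R. \<forall>y\<in>R. x + y \<in> R \<and> x * y \<in> R) \<and> (\<forall>x\<in>R. - x \<in> R)"

definition submod :: "'a::comm_ring_1 set \<Rightarrow> 'a set \<Rightarrow> bool" where
  "submod R M \<longleftrightarrow> 0 \<in> M \<and> (\<forall>x\<in>M. \<forall>y\<in>M. x + y \<in> M) \<and> (\<forall>r\<in>R. \<forall>x\<in>M. r * x \<in> M)"

definition span :: "'a::comm_ring_1 set \<Rightarrow> 'a set \<Rightarrow> 'a set" where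
  "span R X = \<Inter>{M. submod R M \<and> X \<subseteq> M}"

definition fin_gen :: "'a::comm_ring_1 set \<Rightarrow> 'a set \<Rightarrow> bool" where
  "fin_gen R M \<longleftrightarrow> (\<exists>F. finite F \<and> M = span R F)"

definition ideal_of :: "'a::comm_ring_1 set \<Rightarrow> 'a set \<Rightarrow> bool" where
  "ideal_of R J \<longleftrightarrow> submod R J \<and> J \<subseteq> R"

definition prime_of :: "'a::comm_ring_1 set \<Rightarrow> 'a set \<Rightarrow> bool" where
  "prime_of R p \<longleftrightarrow> ideal_of R p \<and> p \<noteq> R \<and> (\<forall>x\<in>R. \<forall>y\<in>R. x * y \<in> p \<longrightarrow> x \<in> p \<or> y \<in> p)"

definition nzd_R :: "'a::comm_ring_1 set \<Rightarrow> 'a \<Rightarrow> bool" where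
  "nzd_R R x \<longleftrightarrow> x \<in> R \<and> (\<forall>y\<in>R. x * y = 0 \<longrightarrow> y = 0)"

definition regular :: "'a::comm_ring_1 \<Rightarrow> bool" where
  "regular x \<longleftrightarrow> (\<forall>y. x * y = 0 \<longrightarrow> y = 0)"

definition total_ring_of_fractions :: "'a::comm_ring_1 set \<Rightarrow> bool" where
  "total_ring_of_fractions R \<longleftrightarrow> subring R \<and>
     (\<forall>s. nzd_R R s \<longrightarrow> (\<exists>t. s * t = 1)) \<and>
     (\<forall>q. \<exists>r\<in>R. \<exists>s. nzd_R R s \<and> q * s = r)"

definition noetherian :: "'a::comm_ring_1 set \<Rightarrow> bool" where
  "noetherian R \<longleftrightarrow> (\<forall>J. ideal_of R J \<longrightarrow> fin_gen R J)"

definition local_ring :: "'a::comm_ring_1 set \<Rightarrow> 'a set \<Rightarrow> bool" where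
  "local_ring R m \<longleftrightarrow> ideal_of R m \<and> m \<noteq> R \<and> (\<forall>J. ideal_of R J \<and> J \<noteq> R \<longrightarrow> J \<subseteq> m)"

definition krull_dim_one :: "'a::comm_ring_1 set \<Rightarrow> bool" where
  "krull_dim_one R \<longleftrightarrow> (\<exists>p q. prime_of R p \<and> prime_of R q \<and> p \<subset> q) \<and>
     \<not> (\<exists>p q s. prime_of R p \<and> prime_of R q \<and> prime_of R s \<and> p \<subset> q \<and> q \<subset> s)"

text \<open>one-dimensional Cohen-Macaulay local ring (depth = 1: m contains a non-zerodivisor),
  embedded in its total ring of fractions\<close>
definition cm1_local :: "'a::comm_ring_1 set \<Rightarrow> 'a set \<Rightarrow> bool" where
  "cm1_local R m \<longleftrightarrow> total_ring_of_fractions R \<and> noetherian R \<and> local_ring R m \<and>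
     krull_dim_one R \<and> (\<exists>x\<in>m. nzd_R R x)"

definition setprod :: "'a::comm_ring_1 set \<Rightarrow> 'a set \<Rightarrow> 'a set \<Rightarrow> 'a set" where
  "setprod R X Y = span R {x * y | x y. x \<in> X \<and> y \<in> Y}"

primrec mpow :: "'a::comm_ring_1 set \<Rightarrow> 'a set \<Rightarrow> nat \<Rightarrow> 'a set" where
  "mpow R X 0 = R"
| "mpow R X (Suc n) = setprod R X (mpow R X n)"

definition colon :: "'a::comm_ring_1 set \<Rightarrow> 'a set \<Rightarrow> 'a set" where
  "colon X Y = {z. \<forall>y\<in>Y. z * y \<in> X}"

definition principal :: "'a::comm_ring_1 set \<Rightarrow> 'a \<Rightarrow> 'a set" where
  "principal R x = {r * x | r. r \<in> R}"

text \<open>length of the R-module M/N (N \<subseteq> M): supremum of lengths of strict chains of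
  R-submodules from N to M (infinity if unbounded)\<close>
definition len :: "'a::comm_ring_1 set \<Rightarrow> 'a set \<Rightarrow> 'a set \<Rightarrow> enat" where
  "len R N M = Sup {enat n | n. \<exists>c. c 0 = N \<and> c n = M \<and> (\<forall>i\<le>n. submod R (c i)) \<and>
      (\<forall>i<n. c i \<subset> c (Suc i))}"

definition frac_ideal :: "'a::comm_ring_1 set \<Rightarrow> 'a set \<Rightarrow> bool" where
  "frac_ideal R M \<longleftrightarrow> submod R M \<and> fin_gen R M \<and> (\<exists>x\<in>M. regular x)"

text \<open>canonical fractional ideal (Herzog-Kunz characterisation of omega isomorphic to K_R)\<close>
definition canonical_frac_ideal :: "'a::comm_ring_1 set \<Rightarrow> 'a set \<Rightarrow> bool" where
  "canonical_frac_ideal R w \<longleftrightarrow> frac_ideal R w \<and>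
     (\<forall>J. frac_ideal R J \<longrightarrow> colon w (colon w J) = J)"

text \<open>Cohen-Macaulay type t: socle dimension of R/(x) for parameters x\<close>
definition cm_type :: "'a::comm_ring_1 set \<Rightarrow> 'a set \<Rightarrow> enat \<Rightarrow> bool" where
  "cm_type R m t \<longleftrightarrow> (\<forall>x\<in>m. nzd_R R x \<longrightarrow>
      len R (principal R x) (colon (principal R x) m \<inter> R) = t)"

definition parameter :: "'a::comm_ring_1 set \<Rightarrow> 'a set \<Rightarrow> 'a \<Rightarrow> bool" where
  "parameter R m a \<longleftrightarrow> a \<in> m \<and> (\<exists>n. mpow R m n \<subseteq> principal R a)"

definition reduction :: "'a::comm_ring_1 set \<Rightarrow> 'a \<Rightarrow> 'a set \<Rightarrow> bool" where
  "reduction R a I \<longleftrightarrow> principal R a \<subseteq> I \<and>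
     (\<exists>n. mpow R I (Suc n) = setprod R (principal R a) (mpow R I n))"

definition ring_gen :: "'a::comm_ring_1 set \<Rightarrow> 'a set \<Rightarrow> 'a set" where
  "ring_gen R K = \<Inter>{T. subring T \<and> R \<union> K \<subseteq> T}"

definition frac_div :: "'a::comm_ring_1 set \<Rightarrow> 'a \<Rightarrow> 'a set" where
  "frac_div I a = {x. a * x \<in> I}"

definition two_AGL :: "'a::comm_ring_1 set \<Rightarrow> 'a set \<Rightarrow> 'a \<Rightarrow> bool" where
  "two_AGL R I a \<longleftrightarrow> len R (frac_div I a) (ring_gen R (frac_div I a)) = 2"

text \<open>A/B \<cong> C/D as R-modules (B \<subseteq> A, D \<subseteq> C): an R-linear map A \<rightarrow> C/D (given
  by representatives), surjective, with kernel B\<close>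
definition quot_iso :: "'a::comm_ring_1 set \<Rightarrow> 'a set \<Rightarrow> 'a set \<Rightarrow> 'a set \<Rightarrow> 'a set \<Rightarrow> bool" where
  "quot_iso R A B C D \<longleftrightarrow> (\<exists>f. (\<forall>x\<in>A. f x \<in> C) \<and>
     (\<forall>x\<in>A. \<forall>y\<in>A. f (x + y) - f x - f y \<in> D) \<and>
     (\<forall>r\<in>R. \<forall>x\<in>A. f (r * x) - r * f x \<in> D) \<and>
     (\<forall>z\<in>C. \<exists>x\<in>A. z - f x \<in> D) \<and>
     (\<forall>x\<in>A. f x \<in> D \<longleftrightarrow> x \<in> B))"

end

theory Submission
  imports Defs
begin


lemma submod_span: "submod R (span R X)"
  unfolding span_def submod_def by blast

lemma span_sup: "X \<subseteq> span R X"
  unfolding span_def by blast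

lemma span_min: "submod R M \<Longrightarrow> X \<subseteq> M \<Longrightarrow> span R X \<subseteq> M"
  unfolding span_def by blast

lemma submodD:
  assumes "submod R M"
  shows "0 \<in> M" "x \<in> M \<Longrightarrow> y \<in> M \<Longrightarrow> x + y \<in> M" "r \<in> R \<Longrightarrow> x \<in> M \<Longrightarrow> r * x \<in> M"
  using assms unfolding submod_def by auto

lemma subringD:
  assumes "subring R"
  shows "0 \<in> R" "1 \<in> R" "x \<in> R \<Longrightarrow> y \<in> R \<Longrightarrow> x + y \<in> R" "x \<in> R \<Longrightarrow> y \<in> R \<Longrightarrow> x * y \<in> R"
    "x \<in> R \<Longrightarrow> - x \<in> R"
  using assms unfolding subring_def by auto

lemma submodD_right: "submod R M \<Longrightarrow> r \<in> R \<Longrightarrow> x \<in> M \<Longrightarrow> x * r \<in> M"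
  using submodD(3)[of R M r x] by (simp add: mult.commute)

lemma submod_neg:
  assumes "subring R" "submod R M" "x \<in> M" shows "- x \<in> M"
proof -
  have "-1 \<in> R" using subringD(2,5)[OF assms(1)] by blast
  hence "(-1) * x \<in> M" using submodD(3)[OF assms(2)] assms(3) by blast
  thus ?thesis by simp
qed

lemma submod_diff:
  assumes "subring R" "submod R M" "x \<in> M" "y \<in> M" shows "x - y \<in> M"
proof -
  have "x + - y \<in> M" using submod_neg[OF assms(1,2,4)] submodD(2)[OF assms(2) assms(3)] by blast
  thus ?thesis by simp
qed

lemma subring_submod: "subring R \<Longrightarrow> submod R R"
  unfolding subring_def submod_def by auto

lemma submod_UNIV: "submod R UNIV" unfolding submod_def by auto

lemma span_eq:
  assumes "submod R M" "X \<subseteq> M" "\<And>N. submod R N \<Longrightarrow> X \<subseteq> N \<Longrightarrow> M \<subseteq> N"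
  shows "span R X = M"
  using assms span_min span_sup submod_span by (metis subset_antisym)

lemma span_submod_self: "submod R M \<Longrightarrow> span R M = M"
  by (rule span_eq) auto

definition smul :: "'a::comm_ring_1 \<Rightarrow> 'a set \<Rightarrow> 'a set" where
  "smul c A = (\<lambda>x. c * x) ` A"

lemma submod_smul:
  assumes "submod R M" shows "submod R (smul c M)"
  unfolding submod_def smul_def
proof (intro conjI ballI)
  show "0 \<in> (*) c ` M" using submodD(1)[OF assms] by (metis image_eqI mult_zero_right)
next
  fix x y assume "x \<in> (*) c ` M" "y \<in> (*) c ` M"
  then obtain x' y' where "x' \<in> M" "y' \<in> M" "x = c * x'" "y = c * y'" by blast
  thus "x + y \<in> (*) c ` M" using submodD(2)[OF assms] by (metis distrib_left image_eqI)
next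
  fix r x assume "r \<in> R" "x \<in> (*) c ` M"
  then obtain x' where "x' \<in> M" "x = c * x'" by blast
  thus "r * x \<in> (*) c ` M" using submodD(3)[OF assms \<open>r \<in> R\<close>] by (metis mult.left_commute image_eqI)
qed

lemma span_smul: "span R (smul c X) = smul c (span R X)"
proof (rule subset_antisym)
  show "span R (smul c X) \<subseteq> smul c (span R X)"
    by (rule span_min) (auto simp: smul_def submod_smul[OF submod_span, unfolded smul_def] intro: span_sup[THEN subsetD])
next
  have "submod R {x. c * x \<in> span R (smul c X)}"
    using submod_span[of R "smul c X"] unfolding submod_def
    by (auto simp: distrib_left mult.left_commute)
  moreover have "X \<subseteq> {x. c * x \<in> span R (smul c X)}"
    using span_sup[of "smul c X" R] by (auto simp: smul_def)
  ultimately have "span R X \<subseteq> {x. c * x \<in> span R (smul c X)}" by (rule span_min)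
  thus "smul c (span R X) \<subseteq> span R (smul c X)" by (auto simp: smul_def)
qed

lemma smul_smul: "smul c (smul d A) = smul (c * d) A"
  unfolding smul_def by (auto simp: image_image mult.assoc)

lemma smul_one: "smul 1 A = A" unfolding smul_def by simp

lemma smul_unit_cancel: "c * d = 1 \<Longrightarrow> smul d (smul c A) = A"
  by (simp add: smul_smul mult.commute smul_one)

lemma smul_mono: "A \<subseteq> B \<Longrightarrow> smul c A \<subseteq> smul c B" unfolding smul_def by auto

lemma smul_inj: "c * d = 1 \<Longrightarrow> smul c A = smul c B \<Longrightarrow> A = B"
  by (metis mult.commute smul_unit_cancel)

lemma smul_mem: "x \<in> A \<Longrightarrow> c * x \<in> smul c A" unfolding smul_def by auto

lemma fin_gen_smul: "fin_gen R X \<Longrightarrow> fin_gen R (smul c X)"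
  unfolding fin_gen_def
  by (metis finite_imageI smul_def span_smul)

lemma submod_setprod: "submod R (setprod R X Y)"
  unfolding setprod_def by (rule submod_span)

lemma setprod_mem: "x \<in> X \<Longrightarrow> y \<in> Y \<Longrightarrow> x * y \<in> setprod R X Y"
  unfolding setprod_def by (rule span_sup[THEN subsetD]) blast

lemma setprod_min: "submod R M \<Longrightarrow> (\<And>x y. x \<in> X \<Longrightarrow> y \<in> Y \<Longrightarrow> x * y \<in> M) \<Longrightarrow> setprod R X Y \<subseteq> M"
  unfolding setprod_def by (rule span_min) auto

lemma colon_setprod:
  assumes "submod R C"
  shows "colon C (setprod R X Y) = {z. \<forall>x\<in>X. \<forall>y\<in>Y. z * (x * y) \<in> C}"
proof (rule set_eqI, rule iffI)
  fix z assume "z \<in> colon C (setprod R X Y)"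
  thus "z \<in> {z. \<forall>x\<in>X. \<forall>y\<in>Y. z * (x * y) \<in> C}" by (auto simp: colon_def intro: setprod_mem)
next
  fix z assume z: "z \<in> {z. \<forall>x\<in>X. \<forall>y\<in>Y. z * (x * y) \<in> C}"
  have "submod R {w. z * w \<in> C}" using assms unfolding submod_def
    by (auto simp: distrib_left mult.left_commute)
  hence "setprod R X Y \<subseteq> {w. z * w \<in> C}" by (rule setprod_min) (use z in auto)
  thus "z \<in> colon C (setprod R X Y)" by (auto simp: colon_def)
qed

lemma submod_colon:
  assumes "submod R C" shows "submod R (colon C X)"
  using assms unfolding submod_def colon_def by (auto simp: distrib_right mult.assoc)

lemma colon_memI: "(\<And>y. y \<in> Y \<Longrightarrow> z * y \<in> X) \<Longrightarrow> z \<in> colon X Y"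
  unfolding colon_def by blast

lemma colon_memD: "z \<in> colon X Y \<Longrightarrow> y \<in> Y \<Longrightarrow> z * y \<in> X"
  unfolding colon_def by blast

lemma colon_anti: "X \<subseteq> Y \<Longrightarrow> colon C Y \<subseteq> colon C X" unfolding colon_def by auto

definition msum :: "'a::comm_ring_1 set \<Rightarrow> 'a set \<Rightarrow> 'a set" where
  "msum A B = {x + y | x y. x \<in> A \<and> y \<in> B}"

lemma submod_msum:
  assumes A: "submod R A" and B: "submod R B" shows "submod R (msum A B)"
  unfolding submod_def msum_def
proof (intro conjI ballI)
  show "0 \<in> {x + y |x y. x \<in> A \<and> y \<in> B}" using submodD(1)[OF A] submodD(1)[OF B] by force
next
  fix x y assume "x \<in> {x + y |x y. x \<in> A \<and> y \<in> B}" "y \<in> {x + y |x y. x \<in> A \<and> y \<in> B}"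
  then obtain x1 x2 y1 y2 where h: "x1 \<in> A" "x2 \<in> B" "x = x1 + x2" "y1 \<in> A" "y2 \<in> B" "y = y1 + y2" by blast
  have "x + y = (x1 + y1) + (x2 + y2)" using h by (simp add: algebra_simps)
  moreover have "x1 + y1 \<in> A" "x2 + y2 \<in> B" using h submodD(2)[OF A] submodD(2)[OF B] by auto
  ultimately show "x + y \<in> {x + y |x y. x \<in> A \<and> y \<in> B}" by blast
next
  fix r x assume r: "r \<in> R" and "x \<in> {x + y |x y. x \<in> A \<and> y \<in> B}"
  then obtain x1 x2 where h: "x1 \<in> A" "x2 \<in> B" "x = x1 + x2" by blast
  have "r * x = r * x1 + r * x2" using h by (simp add: algebra_simps)
  moreover have "r * x1 \<in> A" "r * x2 \<in> B" using h submodD(3)[OF A r] submodD(3)[OF B r] by auto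
  ultimately show "r * x \<in> {x + y |x y. x \<in> A \<and> y \<in> B}" by blast
qed

lemma msum_left: "0 \<in> B \<Longrightarrow> A \<subseteq> msum A B" unfolding msum_def by force
lemma msum_right: "0 \<in> A \<Longrightarrow> B \<subseteq> msum A B" unfolding msum_def by force
lemma msum_min: "submod R M \<Longrightarrow> A \<subseteq> M \<Longrightarrow> B \<subseteq> M \<Longrightarrow> msum A B \<subseteq> M"
  unfolding msum_def submod_def by auto
lemma msum_mono: "A \<subseteq> A' \<Longrightarrow> B \<subseteq> B' \<Longrightarrow> msum A B \<subseteq> msum A' B'"
  unfolding msum_def by blast

lemma span_insert:
  assumes Rr: "subring R"
  shows "span R (insert f F) = {r * f + z | r z. r \<in> R \<and> z \<in> span R F}"
proof (rule span_eq)
  note S = submod_span[of R F]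
  show "submod R {r * f + z | r z. r \<in> R \<and> z \<in> span R F}"
    unfolding submod_def
  proof (intro conjI ballI)
    show "0 \<in> {r * f + z |r z. r \<in> R \<and> z \<in> Defs.span R F}"
      using subringD(1)[OF Rr] submodD(1)[OF S] by force
  next
    fix x y assume "x \<in> {r * f + z |r z. r \<in> R \<and> z \<in> Defs.span R F}"
      "y \<in> {r * f + z |r z. r \<in> R \<and> z \<in> Defs.span R F}"
    then obtain r1 z1 r2 z2 where h: "r1 \<in> R" "z1 \<in> span R F" "x = r1 * f + z1"
       "r2 \<in> R" "z2 \<in> span R F" "y = r2 * f + z2" by blast
    have "x + y = (r1 + r2) * f + (z1 + z2)" using h by (simp add: algebra_simps)
    moreover have "r1 + r2 \<in> R" "z1 + z2 \<in> span R F" using h subringD(3)[OF Rr] submodD(2)[OF S] by auto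
    ultimately show "x + y \<in> {r * f + z |r z. r \<in> R \<and> z \<in> Defs.span R F}" by blast
  next
    fix s x assume s: "s \<in> R" and "x \<in> {r * f + z |r z. r \<in> R \<and> z \<in> Defs.span R F}"
    then obtain r1 z1 where h: "r1 \<in> R" "z1 \<in> span R F" "x = r1 * f + z1" by blast
    have "s * x = (s * r1) * f + s * z1" using h by (simp add: algebra_simps)
    moreover have "s * r1 \<in> R" "s * z1 \<in> span R F" using h s subringD(4)[OF Rr] submodD(3)[OF S] by auto
    ultimately show "s * x \<in> {r * f + z |r z. r \<in> R \<and> z \<in> Defs.span R F}" by blast
  qed
  show "insert f F \<subseteq> {r * f + z | r z. r \<in> R \<and> z \<in> span R F}"
  proof
    fix x assume "x \<in> insert f F"
    thus "x \<in> {r * f + z | r z. r \<in> R \<and> z \<in> span R F}"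
    proof
      assume "x = f"
      hence "x = 1 * f + 0" by simp
      thus ?thesis using subringD(2)[OF Rr] submodD(1)[OF S] by blast
    next
      assume "x \<in> F"
      hence "x = 0 * f + x" "x \<in> span R F" using span_sup by auto
      thus ?thesis using subringD(1)[OF Rr] by blast
    qed
  qed
  fix N assume N: "submod R N" "insert f F \<subseteq> N"
  hence "span R F \<subseteq> N" using span_min by blast
  show "{r * f + z | r z. r \<in> R \<and> z \<in> span R F} \<subseteq> N"
  proof
    fix x assume "x \<in> {r * f + z | r z. r \<in> R \<and> z \<in> span R F}"
    then obtain r z where h: "r \<in> R" "z \<in> span R F" "x = r * f + z" by blast
    have "r * f \<in> N" using N h submodD(3)[OF N(1)] by blast
    moreover have "z \<in> N" using h \<open>span R F \<subseteq> N\<close> by blast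
    ultimately show "x \<in> N" using h submodD(2)[OF N(1)] by blast
  qed
qed

lemma span_empty0: "span R {} = {0}"
proof (rule span_eq)
  show "submod R {0}" unfolding submod_def by simp
qed (auto dest: submodD(1))




definition chain :: "'a::comm_ring_1 set \<Rightarrow> (nat \<Rightarrow> 'a set) \<Rightarrow> nat \<Rightarrow> 'a set \<Rightarrow> 'a set \<Rightarrow> bool" where
  "chain R c n N M \<longleftrightarrow> c 0 = N \<and> c n = M \<and> (\<forall>i\<le>n. submod R (c i)) \<and> (\<forall>i<n. c i \<subset> c (Suc i))"

lemma len_chain: "len R N M = Sup {enat n | n. \<exists>c. chain R c n N M}"
  unfolding len_def chain_def by simp

lemma len_ge: "chain R c n N M \<Longrightarrow> enat n \<le> len R N M"
  unfolding len_chain by (rule Sup_upper) blast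

lemma len_le: "(\<And>c n. chain R c n N M \<Longrightarrow> n \<le> k) \<Longrightarrow> len R N M \<le> enat k"
  unfolding len_chain by (rule Sup_least) auto

lemma chain_mono_aux:
  assumes "chain R c n N M" shows "i \<le> n \<Longrightarrow> c 0 \<subseteq> c i"
proof (induction i)
  case 0 then show ?case by simp
next
  case (Suc i)
  hence "c i \<subset> c (Suc i)" using assms unfolding chain_def by auto
  with Suc show ?case by auto
qed

lemma chain_mono_aux2:
  assumes "chain R c n N M" shows "i \<le> n \<Longrightarrow> c (n - i) \<subseteq> c n"
proof (induction i)
  case 0 then show ?case by simp
next
  case (Suc i)
  show ?case
  proof (cases "Suc i \<le> n")
    case True
    hence "c (n - Suc i) \<subset> c (Suc (n - Suc i))" using assms unfolding chain_def by auto
    moreover have "Suc (n - Suc i) = n - i" using True by simp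
    ultimately show ?thesis using Suc True by auto
  next
    case False then show ?thesis using Suc by simp
  qed
qed

lemma chain_interval:
  assumes "chain R c n N M" "i \<le> n"
  shows "N \<subseteq> c i" "c i \<subseteq> M" "submod R (c i)"
proof -
  show "N \<subseteq> c i" using chain_mono_aux[OF assms] assms(1) unfolding chain_def by simp
  have "c (n - (n - i)) \<subseteq> c n" using chain_mono_aux2[OF assms(1), of "n - i"] by simp
  thus "c i \<subseteq> M" using assms unfolding chain_def by simp
  show "submod R (c i)" using assms unfolding chain_def by simp
qed

lemma chain_strict:
  assumes "chain R c n N M" "0 < n" shows "N \<subset> M"
proof -
  have "c 0 \<subset> c 1" using assms unfolding chain_def by auto
  moreover have "c 1 \<subseteq> M" using chain_interval[OF assms(1)] assms(2) by simp
  ultimately show ?thesis using assms(1) unfolding chain_def by auto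
qed

lemma len_transfer:
  assumes sub: "\<And>L. submod R L \<Longrightarrow> N \<subseteq> L \<Longrightarrow> L \<subseteq> M \<Longrightarrow> submod R' (\<Phi> L)"
    and str: "\<And>L L'. submod R L \<Longrightarrow> N \<subseteq> L \<Longrightarrow> L \<subseteq> M \<Longrightarrow> submod R L' \<Longrightarrow> N \<subseteq> L' \<Longrightarrow> L' \<subseteq> M
       \<Longrightarrow> L \<subset> L' \<Longrightarrow> \<Phi> L \<subset> \<Phi> L'"
    and e1: "\<Phi> N = N'" and e2: "\<Phi> M = M'"
  shows "len R N M \<le> len R' N' M'"
  unfolding len_chain
proof (rule Sup_subset_mono, rule subsetI)
  fix x assume "x \<in> {enat n |n. \<exists>c. chain R c n N M}"
  then obtain n c where x: "x = enat n" and c: "chain R c n N M" by blast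
  have "chain R' (\<lambda>i. \<Phi> (c i)) n N' M'"
    unfolding chain_def
  proof (intro conjI allI impI)
    show "\<Phi> (c 0) = N'" using c e1 unfolding chain_def by simp
    show "\<Phi> (c n) = M'" using c e2 unfolding chain_def by simp
    fix i assume "i \<le> n" thus "submod R' (\<Phi> (c i))" using sub chain_interval[OF c] by blast
  next
    fix i assume i: "i < n"
    have "c i \<subset> c (Suc i)" using c i unfolding chain_def by simp
    thus "\<Phi> (c i) \<subset> \<Phi> (c (Suc i))"
      using str chain_interval[OF c, of i] chain_interval[OF c, of "Suc i"] i by simp
  qed
  thus "x \<in> {enat n |n. \<exists>c. chain R' c n N' M'}" using x by blast
qed

lemma len_transfer_anti:
  assumes sub: "\<And>L. submod R L \<Longrightarrow> N \<subseteq> L \<Longrightarrow> L \<subseteq> M \<Longrightarrow> submod R' (\<Phi> L)"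
    and str: "\<And>L L'. submod R L \<Longrightarrow> N \<subseteq> L \<Longrightarrow> L \<subseteq> M \<Longrightarrow> submod R L' \<Longrightarrow> N \<subseteq> L' \<Longrightarrow> L' \<subseteq> M
       \<Longrightarrow> L \<subset> L' \<Longrightarrow> \<Phi> L' \<subset> \<Phi> L"
    and e1: "\<Phi> M = N'" and e2: "\<Phi> N = M'"
  shows "len R N M \<le> len R' N' M'"
  unfolding len_chain
proof (rule Sup_subset_mono, rule subsetI)
  fix x assume "x \<in> {enat n |n. \<exists>c. chain R c n N M}"
  then obtain n c where x: "x = enat n" and c: "chain R c n N M" by blast
  have "chain R' (\<lambda>i. \<Phi> (c (n - i))) n N' M'"
    unfolding chain_def
  proof (intro conjI allI impI)
    show "\<Phi> (c (n - 0)) = N'" using c e1 unfolding chain_def by simp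
    show "\<Phi> (c (n - n)) = M'" using c e2 unfolding chain_def by simp
    fix i assume "i \<le> n" thus "submod R' (\<Phi> (c (n - i)))" using sub chain_interval[OF c, of "n - i"] by simp
  next
    fix i assume i: "i < n"
    have e: "Suc (n - Suc i) = n - i" using i by simp
    have "c (n - Suc i) \<subset> c (Suc (n - Suc i))" using c i unfolding chain_def by simp
    hence "c (n - Suc i) \<subset> c (n - i)" using e by simp
    thus "\<Phi> (c (n - i)) \<subset> \<Phi> (c (n - Suc i))"
      using str chain_interval[OF c, of "n - i"] chain_interval[OF c, of "n - Suc i"] by simp
  qed
  thus "x \<in> {enat n |n. \<exists>c. chain R' c n N' M'}" using x by blast
qed

lemma len_pos:
  assumes "submod R N" "submod R M" "N \<subset> M" shows "1 \<le> len R N M"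
proof -
  have "chain R (\<lambda>i. if i = 0 then N else M) 1 N M"
    unfolding chain_def using assms by auto
  from len_ge[OF this] show ?thesis by (simp add: one_enat_def)
qed

lemma len_refl: "len R N N = 0"
proof -
  have "len R N N \<le> enat 0"
  proof (rule len_le)
    fix c n assume c: "chain R c n N N"
    show "n \<le> 0" using chain_strict[OF c] by (cases n) auto
  qed
  thus ?thesis by (metis le_zero_eq zero_enat_def)
qed

lemma len_three:
  assumes "submod R N0" "submod R N1" "submod R N2" "submod R N3"
    "N0 \<subset> N1" "N1 \<subset> N2" "N2 \<subset> N3"
  shows "3 \<le> len R N0 N3"
proof -
  let ?c = "\<lambda>i::nat. if i = 0 then N0 else if i = 1 then N1 else if i = 2 then N2 else N3"
  have "chain R ?c 3 N0 N3"
    unfolding chain_def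
  proof (intro conjI allI impI)
    fix i :: nat assume "i \<le> 3" thus "submod R (?c i)" using assms by auto
  next
    fix i :: nat assume "i < 3"
    hence "i = 0 \<or> i = 1 \<or> i = 2" by auto
    thus "?c i \<subset> ?c (Suc i)" using assms by auto
  qed auto
  from len_ge[OF this] show ?thesis by (simp add: numeral_eq_enat)
qed

lemma len_two:
  assumes "submod R N0" "submod R N1" "submod R N2" "N0 \<subset> N1" "N1 \<subset> N2"
  shows "2 \<le> len R N0 N2"
proof -
  let ?c = "\<lambda>i::nat. if i = 0 then N0 else if i = 1 then N1 else N2"
  have "chain R ?c 2 N0 N2"
    unfolding chain_def
  proof (intro conjI allI impI)
    fix i :: nat assume "i \<le> 2" thus "submod R (?c i)" using assms by auto
  next
    fix i :: nat assume "i < 2"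
    hence "i = 0 \<or> i = 1" by auto
    thus "?c i \<subset> ?c (Suc i)" using assms by auto
  qed auto
  from len_ge[OF this] show ?thesis by (simp add: numeral_eq_enat)
qed

lemma len_eq_transfer:
  assumes "len R N M \<le> len R N' M'" "len R N' M' \<le> len R N M" shows "len R N M = len R N' M'"
  using assms by simp




locale setting =
  fixes R m I :: "'a::comm_ring_1 set" and a :: 'a
  assumes cm: "cm1_local R m"
    and idI: "ideal_of R I" and IneR: "I \<noteq> R"
    and can: "canonical_frac_ideal R I"
    and par: "parameter R m a" and red: "reduction R a I"
    and ctyp: "cm_type R m 2"
begin

lemma Rsub: "subring R" using cm unfolding cm1_local_def total_ring_of_fractions_def by blast
lemma nzd_unit: "nzd_R R s \<Longrightarrow> \<exists>t. s * t = 1" using cm unfolding cm1_local_def total_ring_of_fractions_def by blast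
lemma frac_rep: "\<exists>r\<in>R. \<exists>s. nzd_R R s \<and> q * s = r" using cm unfolding cm1_local_def total_ring_of_fractions_def by blast
lemma noeth: "ideal_of R J \<Longrightarrow> fin_gen R J" using cm unfolding cm1_local_def noetherian_def by blast
lemma loc: "local_ring R m" using cm unfolding cm1_local_def by blast
lemma m_ideal: "ideal_of R m" using loc unfolding local_ring_def by blast
lemma m_sub: "submod R m" using m_ideal unfolding ideal_of_def by blast
lemma m_R: "m \<subseteq> R" using m_ideal unfolding ideal_of_def by blast
lemma m_ne: "m \<noteq> R" using loc unfolding local_ring_def by blast
lemma m_max: "ideal_of R J \<Longrightarrow> J \<noteq> R \<Longrightarrow> J \<subseteq> m" using loc unfolding local_ring_def by blast
lemma m_nzd: "\<exists>x\<in>m. nzd_R R x" using cm unfolding cm1_local_def by blast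

lemma R0: "0 \<in> R" and R1: "1 \<in> R" and Radd: "x \<in> R \<Longrightarrow> y \<in> R \<Longrightarrow> x + y \<in> R"
  and Rmul: "x \<in> R \<Longrightarrow> y \<in> R \<Longrightarrow> x * y \<in> R" and Rneg: "x \<in> R \<Longrightarrow> - x \<in> R"
  using subringD[OF Rsub] by auto

lemma Rsubmod: "submod R R" using subring_submod[OF Rsub] .

lemma one_notin_m: "1 \<notin> m"
proof
  assume "1 \<in> m"
  hence "R \<subseteq> m" using submodD(3)[OF m_sub] by (metis mult_1_right subsetI)
  thus False using m_R m_ne by blast
qed

lemma zero_ne_one: "(0::'a) \<noteq> 1"
  using one_notin_m submodD(1)[OF m_sub] by metis

lemma principal_ideal: "x \<in> R \<Longrightarrow> ideal_of R (principal R x)"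
  unfolding ideal_of_def submod_def principal_def
proof (intro conjI ballI subsetI)
  assume x: "x \<in> R"
  show "0 \<in> {r * x |r. r \<in> R}" using R0 by force
  fix y z assume "y \<in> {r * x |r. r \<in> R}" "z \<in> {r * x |r. r \<in> R}"
  then obtain r1 r2 where "r1 \<in> R" "r2 \<in> R" "y = r1 * x" "z = r2 * x" by blast
  hence "y + z = (r1 + r2) * x" "r1 + r2 \<in> R" using Radd by (auto simp: algebra_simps)
  thus "y + z \<in> {r * x |r. r \<in> R}" by blast
next
  assume x: "x \<in> R"
  fix r y assume "r \<in> R" "y \<in> {r * x |r. r \<in> R}"
  then obtain r1 where "r1 \<in> R" "y = r1 * x" by blast
  hence "r * y = (r * r1) * x" "r * r1 \<in> R" using Rmul \<open>r \<in> R\<close> by (auto simp: algebra_simps)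
  thus "r * y \<in> {r * x |r. r \<in> R}" by blast
next
  assume x: "x \<in> R"
  fix y assume "y \<in> {r * x |r. r \<in> R}"
  then obtain r1 where "r1 \<in> R" "y = r1 * x" by blast
  thus "y \<in> R" using Rmul x by blast
qed

lemma unit_notin_m: assumes "x \<in> R" "x \<notin> m" shows "\<exists>v\<in>R. v * x = 1"
proof (rule ccontr)
  assume "\<not> (\<exists>v\<in>R. v * x = 1)"
  have "principal R x \<noteq> R"
  proof
    assume "principal R x = R"
    hence "1 \<in> principal R x" using R1 by simp
    then obtain r where "r \<in> R" "1 = r * x" unfolding principal_def by blast
    thus False using \<open>\<not> (\<exists>v\<in>R. v * x = 1)\<close> by metis
  qed
  hence "principal R x \<subseteq> m" using m_max principal_ideal assms(1) by blast
  moreover have "x \<in> principal R x" using R1 unfolding principal_def by force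
  ultimately show False using assms by blast
qed

lemma one_minus_unit: assumes "x \<in> m" shows "\<exists>v\<in>R. v * (1 - x) = 1"
proof (rule unit_notin_m)
  show "1 - x \<in> R" using submod_diff[OF Rsub Rsubmod R1] assms m_R by blast
  show "1 - x \<notin> m"
  proof
    assume "1 - x \<in> m"
    hence "(1 - x) + x \<in> m" using submodD(2)[OF m_sub] assms by blast
    thus False using one_notin_m by simp
  qed
qed

lemma nzd_regular: assumes "nzd_R R s" shows "regular s"
proof -
  obtain t where "s * t = 1" using nzd_unit assms by blast
  thus ?thesis unfolding regular_def by (metis mult.left_commute mult_1_right mult_zero_right)
qed

lemma nzd_mult: assumes "nzd_R R s1" "nzd_R R s2" shows "nzd_R R (s1 * s2)"
  using assms unfolding nzd_R_def
  by (metis Rmul mult.assoc)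

lemma regular_unit: assumes "regular (y::'a)" shows "\<exists>w. y * w = 1"
proof -
  obtain r s where rs: "r \<in> R" "nzd_R R s" "y * s = r" using frac_rep by blast
  have "nzd_R R r"
    unfolding nzd_R_def
  proof (intro conjI ballI impI)
    show "r \<in> R" by fact
    fix z assume "z \<in> R" "r * z = 0"
    hence "y * (s * z) = 0" using rs by (metis mult.assoc)
    hence "s * z = 0" using assms unfolding regular_def by blast
    thus "z = 0" using rs \<open>z \<in> R\<close> unfolding nzd_R_def by blast
  qed
  then obtain t where "r * t = 1" using nzd_unit by blast
  hence "y * (s * t) = 1" using rs by (metis mult.assoc)
  thus ?thesis by blast
qed

lemma unit_regular: "y * w = 1 \<Longrightarrow> regular y"
  unfolding regular_def by (metis mult.left_commute mult_1_right mult_zero_right)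

lemma pow_in_mpow: assumes "x \<in> X" shows "x ^ n \<in> mpow R X n"
proof (induction n)
  case 0 thus ?case using R1 by simp
next
  case (Suc n) thus ?case using setprod_mem[OF assms Suc] by simp
qed

lemma a_m: "a \<in> m" using par unfolding parameter_def by blast
lemma a_R: "a \<in> R" using a_m m_R by blast

lemma a_nzd: "nzd_R R a"
proof -
  obtain x where x: "x \<in> m" "nzd_R R x" using m_nzd by blast
  obtain n where n: "mpow R m n \<subseteq> principal R a" using par unfolding parameter_def by blast
  have xn: "nzd_R R (x ^ n)"
  proof (induction n)
    case 0 thus ?case unfolding nzd_R_def using R1 by simp
  next
    case (Suc n) thus ?case using nzd_mult[OF x(2) Suc] by simp
  qed
  have "x ^ n \<in> principal R a" using pow_in_mpow[OF x(1)] n by blast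
  then obtain r where r: "r \<in> R" "x ^ n = r * a" unfolding principal_def by blast
  show ?thesis unfolding nzd_R_def
  proof (intro conjI ballI impI)
    show "a \<in> R" using a_R .
    fix y assume "y \<in> R" "a * y = 0"
    hence "x ^ n * y = 0" using r by (simp add: mult.assoc)
    thus "y = 0" using xn \<open>y \<in> R\<close> unfolding nzd_R_def by blast
  qed
qed

definition u where "u = (SOME t. a * t = 1)"
lemma au: "a * u = 1" unfolding u_def using nzd_unit[OF a_nzd] by (rule someI_ex)
lemma ua: "u * a = 1" using au by (simp add: mult.commute)

section \<open>Noetherian: submodules of f.g. modules\<close>

lemma denom_finite: "finite F \<Longrightarrow> \<exists>s. nzd_R R s \<and> (\<forall>f\<in>F. s * f \<in> R)"
proof (induction F rule: finite_induct)
  case empty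
  have "nzd_R R 1" unfolding nzd_R_def using R1 by simp
  thus ?case by blast
next
  case (insert f F)
  then obtain s where s: "nzd_R R s" "\<forall>f\<in>F. s * f \<in> R" by blast
  obtain r s' where rs: "r \<in> R" "nzd_R R s'" "f * s' = r" using frac_rep by blast
  have "s * s' \<in> R" "s \<in> R" "s' \<in> R" using s(1) rs(2) unfolding nzd_R_def by (auto intro: Rmul)
  have "\<forall>g\<in>insert f F. (s * s') * g \<in> R"
  proof
    fix g assume "g \<in> insert f F"
    thus "(s * s') * g \<in> R"
    proof
      assume "g = f"
      hence "(s * s') * g = s * r" using rs by (metis mult.commute mult.left_commute)
      thus ?thesis using Rmul \<open>s \<in> R\<close> rs(1) by simp
    next
      assume "g \<in> F"
      have e: "(s * s') * g = s' * (s * g)" by (simp add: algebra_simps)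
      have "s' * (s * g) \<in> R" using Rmul \<open>s' \<in> R\<close> s(2) \<open>g \<in> F\<close> by blast
      thus ?thesis using e by metis
    qed
  qed
  thus ?case using nzd_mult[OF s(1) rs(2)] by blast
qed

lemma denom_fg: assumes "fin_gen R X" shows "\<exists>s. nzd_R R s \<and> (\<forall>x\<in>X. s * x \<in> R)"
proof -
  obtain F where F: "finite F" "X = span R F" using assms unfolding fin_gen_def by blast
  obtain s where s: "nzd_R R s" "\<forall>f\<in>F. s * f \<in> R" using denom_finite[OF F(1)] by blast
  have "submod R {q. s * q \<in> R}" using Rsubmod unfolding submod_def
    by (auto simp: distrib_left mult.left_commute)
  hence "span R F \<subseteq> {q. s * q \<in> R}" by (rule span_min) (use s in auto)
  thus ?thesis using s F by blast
qed

lemma fg_sub: assumes "fin_gen R X" "submod R L" "L \<subseteq> X" shows "fin_gen R L"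
proof -
  obtain s where s: "nzd_R R s" "\<forall>x\<in>X. s * x \<in> R" using denom_fg[OF assms(1)] by blast
  obtain t where t: "s * t = 1" using nzd_unit[OF s(1)] by blast
  have "ideal_of R (smul s L)" unfolding ideal_of_def
    using submod_smul[OF assms(2)] s assms(3) by (auto simp: smul_def)
  hence "fin_gen R (smul s L)" by (rule noeth)
  hence "fin_gen R (smul t (smul s L))" by (rule fin_gen_smul)
  thus ?thesis using smul_unit_cancel[OF t] by simp
qed

section \<open>Nakayama\<close>

lemma mprod_sub: assumes M: "submod R M" shows "setprod R m M \<subseteq> M"
proof (rule setprod_min[OF M])
  fix x y assume "x \<in> m" "y \<in> M"
  thus "x * y \<in> M" using submodD(3)[OF M] m_R by blast
qed

lemma nakayama_aux:
  assumes "finite F"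
  shows "submod R N \<Longrightarrow> span R F \<subseteq> msum N (setprod R m (span R F)) \<Longrightarrow> span R F \<subseteq> N"
  using assms
proof (induction F arbitrary: N rule: finite_induct)
  case empty show ?case using span_empty0[of R] submodD(1)[OF empty(1)] by simp
next
  case (insert f F)
  note N = insert.prems(1)
  define M where "M = span R (insert f F)"
  define M' where "M' = span R F"
  define P' where "P' = setprod R m M'"
  have Meq: "M = {r * f + z | r z. r \<in> R \<and> z \<in> M'}" unfolding M_def M'_def by (rule span_insert[OF Rsub])
  have subM': "submod R M'" unfolding M'_def by (rule submod_span)
  have subP': "submod R P'" unfolding P'_def by (rule submod_setprod)
  have P'M': "P' \<subseteq> M'" unfolding P'_def by (rule mprod_sub[OF subM'])
  have M'M: "M' \<subseteq> M" unfolding Meq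
  proof
    fix z assume "z \<in> M'" thus "z \<in> {r * f + z | r z. r \<in> R \<and> z \<in> M'}" using R0 by force
  qed
  have T: "setprod R m M \<subseteq> msum (smul f m) P'"
  proof (rule setprod_min)
    show "submod R (msum (smul f m) P')" by (rule submod_msum[OF submod_smul[OF m_sub] subP'])
    fix x y assume x: "x \<in> m" and y: "y \<in> M"
    then obtain r z where rz: "r \<in> R" "z \<in> M'" "y = r * f + z" using Meq by blast
    have "x * y = f * (x * r) + x * z" using rz by (simp add: algebra_simps)
    moreover have "x * r \<in> m" using submodD(3)[OF m_sub rz(1) x] by (simp add: mult.commute)
    moreover have "x * z \<in> P'" unfolding P'_def using setprod_mem[OF x rz(2)] .
    ultimately show "x * y \<in> msum (smul f m) P'" unfolding msum_def smul_def by blast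
  qed
  have hyp: "M \<subseteq> msum N (msum (smul f m) P')"
    using insert.prems(2) msum_mono[OF subset_refl T] unfolding M_def by blast
  have fM: "f \<in> M" unfolding M_def using span_sup by blast
  then obtain n x y where nxy: "n \<in> N" "x \<in> m" "y \<in> P'" "f = n + f * x + y"
    using hyp unfolding msum_def smul_def by (auto simp: add.assoc)
  obtain v where v: "v \<in> R" "v * (1 - x) = 1" using one_minus_unit[OF nxy(2)] by blast
  have "(1 - x) * f = n + y" using nxy(4) by (simp add: algebra_simps)
  hence feq: "f = v * n + v * y" using v(2) by (metis distrib_left mult.assoc mult_1_left)
  have vn: "v * n \<in> N" using submodD(3)[OF N v(1) nxy(1)] .
  have vy: "v * y \<in> P'" using submodD(3)[OF subP' v(1) nxy(3)] .
  have "M' \<subseteq> msum N P'"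
  proof
    fix z assume "z \<in> M'"
    hence "z \<in> msum N (msum (smul f m) P')" using hyp M'M by blast
    then obtain n1 x1 y1 where h: "n1 \<in> N" "x1 \<in> m" "y1 \<in> P'" "z = n1 + f * x1 + y1"
      unfolding msum_def smul_def by (auto simp: add.assoc)
    have x1R: "x1 \<in> R" using h(2) m_R by blast
    have "z = (n1 + x1 * (v * n)) + (x1 * (v * y) + y1)" using h feq by (simp add: algebra_simps)
    moreover have "n1 + x1 * (v * n) \<in> N" using submodD(2)[OF N h(1) submodD(3)[OF N x1R vn]] .
    moreover have "x1 * (v * y) + y1 \<in> P'" using submodD(2)[OF subP' submodD(3)[OF subP' x1R vy] h(3)] .
    ultimately show "z \<in> msum N P'" unfolding msum_def by blast
  qed
  hence "M' \<subseteq> N" using insert.IH[OF N] unfolding M'_def P'_def by blast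
  hence "f \<in> N" using feq vn vy P'M' submodD(2)[OF N] by blast
  show ?case unfolding M_def[symmetric] Meq
  proof
    fix w assume "w \<in> {r * f + z | r z. r \<in> R \<and> z \<in> M'}"
    then obtain r z where "r \<in> R" "z \<in> M'" "w = r * f + z" by blast
    thus "w \<in> N" using \<open>f \<in> N\<close> \<open>M' \<subseteq> N\<close> submodD(2,3)[OF N] by blast
  qed
qed

lemma nakayama:
  assumes "fin_gen R M" "submod R N" "M \<subseteq> msum N (setprod R m M)"
  shows "M \<subseteq> N"
  using assms nakayama_aux unfolding fin_gen_def by blast

end



lemma colon_scaled:
  fixes a u :: "'a::comm_ring_1"
  assumes "a * u = 1"
  shows "colon {x. a * x \<in> B} (colon {x. a * x \<in> B} J) = colon B (colon B J)"
proof -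
  have c1: "colon {x. a * x \<in> B} J = {z. a * z \<in> colon B J}"
    unfolding colon_def by (auto simp: mult.assoc)
  show ?thesis unfolding c1
  proof (rule set_eqI, rule iffI)
    fix w assume w: "w \<in> colon {x. a * x \<in> B} {z. a * z \<in> colon B J}"
    show "w \<in> colon B (colon B J)"
    proof (rule colon_memI)
      fix c assume c: "c \<in> colon B J"
      have "a * (u * c) = c" using assms by (simp add: mult.assoc[symmetric])
      hence "u * c \<in> {z. a * z \<in> colon B J}" using c by simp
      hence "w * (u * c) \<in> {x. a * x \<in> B}" by (rule colon_memD[OF w])
      hence "a * (w * (u * c)) \<in> B" by simp
      moreover have "a * (w * (u * c)) = w * c" using assms
        by (metis mult.left_commute mult_1_right)
      ultimately show "w * c \<in> B" by simp
    qed
  next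
    fix w assume w: "w \<in> colon B (colon B J)"
    show "w \<in> colon {x. a * x \<in> B} {z. a * z \<in> colon B J}"
    proof (rule colon_memI)
      fix z assume "z \<in> {z. a * z \<in> colon B J}"
      hence "w * (a * z) \<in> B" using w colon_memD by blast
      thus "w * z \<in> {x. a * x \<in> B}" by (simp add: mult.left_commute)
    qed
  qed
qed

context setting begin

definition canon :: "'a set \<Rightarrow> bool" where
  "canon C \<longleftrightarrow> frac_ideal R C \<and> R \<subseteq> C \<and> (\<forall>J. frac_ideal R J \<longrightarrow> colon C (colon C J) = J)"

lemma frac_colon: assumes C: "canon C" and X: "frac_ideal R X" shows "frac_ideal R (colon C X)"
proof -
  have Cs: "submod R C" "fin_gen R C" "R \<subseteq> C" using C unfolding canon_def frac_ideal_def by auto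
  have Xs: "submod R X" "fin_gen R X" using X unfolding frac_ideal_def by auto
  obtain y where y: "y \<in> X" "regular y" using X unfolding frac_ideal_def by blast
  obtain w where w: "y * w = 1" using regular_unit[OF y(2)] by blast
  obtain s where s: "nzd_R R s" "\<forall>x\<in>X. s * x \<in> R" using denom_fg[OF Xs(2)] by blast
  have sub: "submod R (colon C X)" by (rule submod_colon[OF Cs(1)])
  have "s \<in> colon C X" using s Cs(3) unfolding colon_def by blast
  moreover have "regular s" using nzd_regular[OF s(1)] .
  moreover have "fin_gen R (colon C X)"
  proof (rule fg_sub[OF fin_gen_smul[OF Cs(2)] sub])
    show "colon C X \<subseteq> smul w C"
    proof
      fix z assume "z \<in> colon C X"
      hence "z * y \<in> C" using y unfolding colon_def by blast
      moreover have "z = w * (z * y)" using w by (metis mult.commute mult.left_commute mult_1_right)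
      ultimately show "z \<in> smul w C" unfolding smul_def by blast
    qed
  qed
  ultimately show ?thesis using sub unfolding frac_ideal_def by blast
qed

lemma frac_between:
  assumes X: "frac_ideal R X" and Y: "frac_ideal R Y" and L: "submod R L" "Y \<subseteq> L" "L \<subseteq> X"
  shows "frac_ideal R L"
proof -
  have "fin_gen R L" using fg_sub[OF _ L(1) L(3)] X unfolding frac_ideal_def by blast
  moreover obtain y where "y \<in> Y" "regular y" using Y unfolding frac_ideal_def by blast
  ultimately show ?thesis using L unfolding frac_ideal_def by blast
qed

lemma dual_le:
  assumes C: "canon C" and X: "frac_ideal R X" and Y: "frac_ideal R Y" and YX: "Y \<subseteq> X"
  shows "len R Y X \<le> len R (colon C X) (colon C Y)"
proof (rule len_transfer_anti)
  have Cs: "submod R C" using C unfolding canon_def frac_ideal_def by auto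
  have inv: "\<And>J. frac_ideal R J \<Longrightarrow> colon C (colon C J) = J" using C unfolding canon_def by blast
  fix L assume "submod R L" "Y \<subseteq> L" "L \<subseteq> X"
  show "submod R (colon C L)" by (rule submod_colon[OF Cs])
next
  have inv: "\<And>J. frac_ideal R J \<Longrightarrow> colon C (colon C J) = J" using C unfolding canon_def by blast
  fix L L' assume L: "submod R L" "Y \<subseteq> L" "L \<subseteq> X" and L': "submod R L'" "Y \<subseteq> L'" "L' \<subseteq> X"
    and LL: "L \<subset> L'"
  have fL: "frac_ideal R L" using frac_between[OF X Y L] .
  have fL': "frac_ideal R L'" using frac_between[OF X Y L'] .
  have "colon C L' \<subseteq> colon C L" using colon_anti LL by blast
  moreover have "colon C L' \<noteq> colon C L"
  proof
    assume "colon C L' = colon C L"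
    hence "colon C (colon C L') = colon C (colon C L)" by simp
    thus False using inv[OF fL] inv[OF fL'] LL by simp
  qed
  ultimately show "colon C L' \<subset> colon C L" by blast
qed auto

lemma dual_len:
  assumes C: "canon C" and X: "frac_ideal R X" and Y: "frac_ideal R Y" and YX: "Y \<subseteq> X"
  shows "len R Y X = len R (colon C X) (colon C Y)"
proof (rule antisym)
  show "len R Y X \<le> len R (colon C X) (colon C Y)" by (rule dual_le[OF assms])
  have inv: "\<And>J. frac_ideal R J \<Longrightarrow> colon C (colon C J) = J" using C unfolding canon_def by blast
  have "len R (colon C X) (colon C Y) \<le> len R (colon C (colon C Y)) (colon C (colon C X))"
    by (rule dual_le[OF C frac_colon[OF C Y] frac_colon[OF C X] colon_anti[OF YX]])
  thus "len R (colon C X) (colon C Y) \<le> len R Y X" using inv[OF X] inv[OF Y] by simp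
qed

lemma frac_R: "frac_ideal R R"
proof -
  have "span R {1} = R"
  proof (rule span_eq[OF Rsubmod])
    show "{1} \<subseteq> R" using R1 by simp
    fix N assume N: "submod R N" "{1} \<subseteq> N"
    show "R \<subseteq> N"
    proof
      fix r assume "r \<in> R"
      hence "r * 1 \<in> N" using submodD(3)[OF N(1)] N(2) by blast
      thus "r \<in> N" by simp
    qed
  qed
  hence "fin_gen R R" unfolding fin_gen_def by (metis finite.emptyI finite.insertI)
  moreover have "regular (1::'a)" unfolding regular_def by simp
  ultimately show ?thesis using Rsubmod R1 unfolding frac_ideal_def by blast
qed

lemma frac_m: "frac_ideal R m"
  using m_sub noeth[OF m_ideal] m_nzd nzd_regular unfolding frac_ideal_def by blast

lemma colon_RR: "colon R R = R"
proof
  show "colon R R \<subseteq> R" unfolding colon_def using R1 by force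
  show "R \<subseteq> colon R R" unfolding colon_def using Rmul by blast
qed

lemma len_mR: "len R m R \<le> 1"
proof -
  have "len R m R \<le> enat 1"
  proof (rule len_le)
    fix c n assume c: "chain R c n m R"
    show "n \<le> 1"
    proof (rule ccontr)
      assume "\<not> n \<le> 1"
      hence n: "2 \<le> n" by simp
      have c1: "submod R (c 1)" "c 1 \<subseteq> R" using chain_interval[OF c, of 1] n by auto
      have "c 1 \<subset> c 2" using c n unfolding chain_def by (metis Suc_1 Suc_le_lessD)
      moreover have "c 2 \<subseteq> R" using chain_interval[OF c, of 2] n by auto
      ultimately have "c 1 \<noteq> R" by blast
      hence "c 1 \<subseteq> m" using m_max c1 unfolding ideal_of_def by blast
      moreover have "c 0 \<subset> c 1"
      proof -
        have "(0::nat) < n" using n by simp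
        hence "c 0 \<subset> c (Suc 0)" using c unfolding chain_def by blast
        thus ?thesis by simp
      qed
      moreover have "c 0 = m" using c unfolding chain_def by simp
      ultimately show False by blast
    qed
  qed
  thus ?thesis by (simp add: one_enat_def)
qed

definition W where "W = colon R m"

lemma len_scale:
  assumes cd: "c * d = 1"
  shows "len R N M \<le> len R (smul c N) (smul c M)"
proof (rule len_transfer)
  fix L assume "submod R L" thus "submod R (smul c L)" by (rule submod_smul)
next
  fix L L' :: "'a set" assume "L \<subset> L'"
  thus "smul c L \<subset> smul c L'" using smul_mono smul_inj[OF cd] by blast
qed auto

lemma len_scale_eq:
  assumes cd: "c * d = 1"
  shows "len R (smul c N) (smul c M) = len R N M"
proof (rule antisym)
  show "len R N M \<le> len R (smul c N) (smul c M)" by (rule len_scale[OF cd])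
  have dc: "d * c = 1" using cd by (simp add: mult.commute)
  have "len R (smul c N) (smul c M) \<le> len R (smul d (smul c N)) (smul d (smul c M))" by (rule len_scale[OF dc])
  thus "len R (smul c N) (smul c M) \<le> len R N M" using smul_unit_cancel[OF cd] by simp
qed

lemma len_RW: "len R R W = 2"
proof -
  have "len R (principal R a) (colon (principal R a) m \<inter> R) = 2"
    using ctyp a_m a_nzd unfolding cm_type_def by blast
  moreover have "principal R a = smul a R" unfolding principal_def smul_def by (auto simp: mult.commute)
  moreover have "colon (principal R a) m \<inter> R = smul a W"
  proof
    show "colon (principal R a) m \<inter> R \<subseteq> smul a W"
    proof
      fix z assume z: "z \<in> colon (principal R a) m \<inter> R"
      have "u * z \<in> W" unfolding W_def
      proof (rule colon_memI)
        fix y assume "y \<in> m"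
        then obtain r where r: "r \<in> R" "z * y = r * a" using z unfolding colon_def principal_def by blast
        have "u * z * y = r" using r(2) ua by (metis mult.assoc mult.commute mult_1_right)
        thus "u * z * y \<in> R" using r(1) by simp
      qed
      moreover have "z = a * (u * z)" using au by (metis mult.assoc mult_1_left)
      ultimately show "z \<in> smul a W" unfolding smul_def by blast
    qed
    show "smul a W \<subseteq> colon (principal R a) m \<inter> R"
    proof
      fix x assume "x \<in> smul a W"
      then obtain w where w: "w \<in> W" "x = a * w" unfolding smul_def by blast
      have "x \<in> colon (principal R a) m" unfolding principal_def
      proof (rule colon_memI)
        fix y assume "y \<in> m"
        hence "w * y \<in> R" using w unfolding W_def colon_def by blast
        moreover have "x * y = (w * y) * a" using w by (simp add: algebra_simps)
        ultimately show "x * y \<in> {r * a |r. r \<in> R}" by blast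
      qed
      moreover have "x \<in> R"
      proof -
        have "w * a \<in> R" using colon_memD[of w R m a] w(1) a_m unfolding W_def by blast
        thus ?thesis using w(2) by (simp add: mult.commute)
      qed
      ultimately show "x \<in> colon (principal R a) m \<inter> R" by blast
    qed
  qed
  ultimately show ?thesis using len_scale_eq[OF au] by simp
qed

lemma R_not_canon: "\<not> (\<forall>J. frac_ideal R J \<longrightarrow> colon R (colon R J) = J)"
proof
  assume h: "\<forall>J. frac_ideal R J \<longrightarrow> colon R (colon R J) = J"
  hence "canon R" unfolding canon_def using frac_R by blast
  hence "len R m R = len R (colon R R) (colon R m)" using dual_len frac_R frac_m m_R by blast
  hence "len R m R = 2" using len_RW colon_RR unfolding W_def by simp
  thus False using len_mR by simp
qed

end



context setting begin

definition K where "K = frac_div I a"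

lemma I_sub: "submod R I" and I_R: "I \<subseteq> R" using idI unfolding ideal_of_def by auto
lemma a_I: "a \<in> I"
proof -
  have "principal R a \<subseteq> I" using red unfolding reduction_def by blast
  moreover have "a \<in> principal R a" unfolding principal_def using R1 by force
  ultimately show ?thesis by blast
qed

lemma K_mem: "x \<in> K \<longleftrightarrow> a * x \<in> I" unfolding K_def frac_div_def by simp

lemma K_smul: "K = smul u I"
proof
  show "K \<subseteq> smul u I"
  proof
    fix x assume "x \<in> K"
    hence "a * x \<in> I" by (simp add: K_mem)
    moreover have "x = u * (a * x)" using ua by (metis mult.assoc mult_1_left)
    ultimately show "x \<in> smul u I" unfolding smul_def by blast
  qed
  show "smul u I \<subseteq> K"
  proof
    fix x assume "x \<in> smul u I"
    then obtain i where "i \<in> I" "x = u * i" unfolding smul_def by blast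
    moreover have "a * (u * i) = i" using au by (metis mult.assoc mult_1_left)
    ultimately show "x \<in> K" by (simp add: K_mem)
  qed
qed

lemma K_sub: "submod R K" unfolding K_smul by (rule submod_smul[OF I_sub])

lemma R_K: "R \<subseteq> K"
proof
  fix r assume "r \<in> R"
  hence "r * a \<in> I" using submodD(3)[OF I_sub] a_I by blast
  thus "r \<in> K" by (simp add: K_mem mult.commute)
qed

lemma one_K: "1 \<in> K" using R_K R1 by blast

lemma frac_I: "frac_ideal R I" using can unfolding canonical_frac_ideal_def by blast

lemma frac_K: "frac_ideal R K"
proof -
  have "fin_gen R K" unfolding K_smul using frac_I fin_gen_smul unfolding frac_ideal_def by blast
  moreover have "regular (1::'a)" unfolding regular_def by simp
  ultimately show ?thesis using K_sub one_K unfolding frac_ideal_def by blast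
qed

lemma canon_K: "canon K"
proof -
  have "\<forall>J. frac_ideal R J \<longrightarrow> colon K (colon K J) = J"
  proof (intro allI impI)
    fix J assume "frac_ideal R J"
    hence "colon I (colon I J) = J" using can unfolding canonical_frac_ideal_def by blast
    moreover have "colon K (colon K J) = colon I (colon I J)"
      unfolding K_def frac_div_def by (rule colon_scaled[OF au])
    ultimately show "colon K (colon K J) = J" by simp
  qed
  thus ?thesis unfolding canon_def using frac_K R_K by blast
qed

lemma K_inv: "frac_ideal R J \<Longrightarrow> colon K (colon K J) = J"
  using canon_K unfolding canon_def by blast

lemma colon_KR: "colon K R = K"
proof
  show "colon K R \<subseteq> K" using colon_memD[of _ K R 1] R1 by force
  show "K \<subseteq> colon K R"
  proof
    fix k assume "k \<in> K"
    show "k \<in> colon K R"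
    proof (rule colon_memI)
      fix r assume "r \<in> R"
      thus "k * r \<in> K" using submodD_right[OF K_sub] \<open>k \<in> K\<close> by blast
    qed
  qed
qed

lemma colon_KK: "colon K K = R"
  using K_inv[OF frac_R] colon_KR by simp

lemma K_not_principal: assumes gh: "g * h = 1" shows "K \<noteq> smul g R"
proof
  assume Kg: "K = smul g R"
  have "K = {x. h * x \<in> R}"
  proof
    show "K \<subseteq> {x. h * x \<in> R}"
    proof
      fix x assume "x \<in> K"
      then obtain r where "r \<in> R" "x = g * r" using Kg unfolding smul_def by blast
      moreover have "h * (g * r) = r" using gh by (metis mult.assoc mult.commute mult_1_left)
      ultimately show "x \<in> {x. h * x \<in> R}" by simp
    qed
    show "{x. h * x \<in> R} \<subseteq> K"
    proof
      fix x assume "x \<in> {x. h * x \<in> R}"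
      moreover have "x = g * (h * x)" using gh by (metis mult.assoc mult_1_left)
      ultimately show "x \<in> K" using Kg unfolding smul_def by blast
    qed
  qed
  have hg: "h * g = 1" using gh by (simp add: mult.commute)
  have "\<forall>J. frac_ideal R J \<longrightarrow> colon R (colon R J) = J"
  proof (intro allI impI)
    fix J assume "frac_ideal R J"
    hence "colon K (colon K J) = J" by (rule K_inv)
    moreover have "colon K (colon K J) = colon R (colon R J)"
      unfolding \<open>K = {x. h * x \<in> R}\<close> by (rule colon_scaled[OF hg])
    ultimately show "colon R (colon R J) = J" by simp
  qed
  thus False using R_not_canon by blast
qed

lemma K_ne_R: "K \<noteq> R"
  using K_not_principal[of 1 1] by (simp add: smul_one)

definition mK where "mK = setprod R m K"

lemma mK_sub: "submod R mK" unfolding mK_def by (rule submod_setprod)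
lemma mK_K: "mK \<subseteq> K" unfolding mK_def by (rule mprod_sub[OF K_sub])

lemma frac_mK: "frac_ideal R mK"
proof -
  obtain x where x: "x \<in> m" "nzd_R R x" using m_nzd by blast
  have "x * 1 \<in> mK" unfolding mK_def using setprod_mem[OF x(1) one_K] .
  moreover have "fin_gen R mK" using fg_sub[OF _ mK_sub mK_K] frac_K unfolding frac_ideal_def by blast
  ultimately show ?thesis using mK_sub nzd_regular[OF x(2)] unfolding frac_ideal_def by auto
qed

lemma colon_K_mK: "colon K mK = W"
proof -
  have "colon K mK = {z. \<forall>x\<in>m. \<forall>y\<in>K. z * (x * y) \<in> K}"
    unfolding mK_def by (rule colon_setprod[OF K_sub])
  also have "\<dots> = {z. \<forall>x\<in>m. z * x \<in> colon K K}"
  proof (rule Collect_cong, rule ball_cong[OF refl])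
    fix z x show "(\<forall>y\<in>K. z * (x * y) \<in> K) = (z * x \<in> colon K K)"
      unfolding colon_def by (simp add: mult.assoc)
  qed
  also have "\<dots> = W" unfolding colon_KK W_def by (simp add: colon_def)
  finally show ?thesis .
qed

lemma len_mK: "len R mK K = 2"
  using dual_len[OF canon_K frac_K frac_mK mK_K] colon_KK colon_K_mK len_RW by simp

lemma mpow_ideal: "submod R (mpow R I k) \<and> mpow R I k \<subseteq> R"
proof (induction k)
  case 0 thus ?case using Rsubmod by simp
next
  case (Suc k)
  have "setprod R I (mpow R I k) \<subseteq> R"
  proof (rule setprod_min[OF Rsubmod])
    fix x y assume "x \<in> I" "y \<in> mpow R I k"
    thus "x * y \<in> R" using I_R Suc Rmul by blast
  qed
  thus ?case using submod_setprod by simp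
qed

lemma a_pow_ne0: "a ^ k \<noteq> 0"
proof
  assume "a ^ k = 0"
  moreover have "a ^ k * u ^ k = 1" using au by (metis power_mult_distrib power_one)
  ultimately show False using zero_ne_one by simp
qed

lemma one_notin_mK: "1 \<notin> mK"
proof
  assume one: "1 \<in> mK"
  obtain n where n: "mpow R I (Suc n) = setprod R (principal R a) (mpow R I n)"
    using red unfolding reduction_def by blast
  define Jn where "Jn = mpow R I n"
  define J where "J = mpow R I (Suc n)"
  have JJ: "J = setprod R I Jn" unfolding J_def Jn_def by simp
  define P where "P = setprod R m J"
  have subP: "submod R P" unfolding P_def by (rule submod_setprod)
  define M where "M = {t. \<forall>z\<in>Jn. a * t * z \<in> P}"
  have subM: "submod R M" unfolding submod_def M_def
  proof (intro conjI ballI CollectI)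
    fix z assume "z \<in> Jn" thus "a * 0 * z \<in> P" using submodD(1)[OF subP] by simp
  next
    fix x y z assume "x \<in> {t. \<forall>z\<in>Jn. a * t * z \<in> P}" "y \<in> {t. \<forall>z\<in>Jn. a * t * z \<in> P}" "z \<in> Jn"
    hence "a * x * z \<in> P" "a * y * z \<in> P" by auto
    hence "a * x * z + a * y * z \<in> P" using submodD(2)[OF subP] by blast
    thus "a * (x + y) * z \<in> P" by (simp add: algebra_simps)
  next
    fix r x z assume "r \<in> R" "x \<in> {t. \<forall>z\<in>Jn. a * t * z \<in> P}" "z \<in> Jn"
    hence "a * x * z \<in> P" by auto
    hence "r * (a * x * z) \<in> P" using submodD(3)[OF subP \<open>r \<in> R\<close>] by blast
    thus "a * (r * x) * z \<in> P" by (simp add: algebra_simps)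
  qed
  have "mK \<subseteq> M" unfolding mK_def
  proof (rule setprod_min[OF subM])
    fix x k assume x: "x \<in> m" and k: "k \<in> K"
    show "x * k \<in> M" unfolding M_def
    proof (intro CollectI ballI)
      fix z assume z: "z \<in> Jn"
      have "a * k \<in> I" using k by (simp add: K_mem)
      hence "(a * k) * z \<in> J" unfolding JJ using setprod_mem z by blast
      hence "x * ((a * k) * z) \<in> P" unfolding P_def using setprod_mem x by blast
      thus "a * (x * k) * z \<in> P" by (simp add: algebra_simps)
    qed
  qed
  hence aJ: "\<forall>z\<in>Jn. a * z \<in> P" using one unfolding M_def by auto
  have "J \<subseteq> P" unfolding J_def n Jn_def[symmetric]
  proof (rule setprod_min[OF subP])
    fix x z assume "x \<in> principal R a" "z \<in> Jn"
    then obtain r where r: "r \<in> R" "x = r * a" unfolding principal_def by blast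
    have "r * (a * z) \<in> P" using submodD(3)[OF subP r(1)] aJ \<open>z \<in> Jn\<close> by blast
    thus "x * z \<in> P" using r by (simp add: algebra_simps)
  qed
  hence "J \<subseteq> msum {0} (setprod R m J)" unfolding P_def msum_def by force
  moreover have "fin_gen R J" using noeth mpow_ideal unfolding J_def ideal_of_def by blast
  moreover have "submod R {0}" unfolding submod_def by simp
  ultimately have "J \<subseteq> {0}" using nakayama by blast
  moreover have "a ^ Suc n \<in> J" unfolding J_def by (rule pow_in_mpow[OF a_I])
  ultimately show False using a_pow_ne0 by blast
qed

lemma K_structure: "\<exists>g. g \<in> K \<and> g \<notin> R \<and> K = msum R (smul g R)"
proof -
  define N1 where "N1 = msum R mK"
  have subN1: "submod R N1" unfolding N1_def by (rule submod_msum[OF Rsubmod mK_sub])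
  have N1K: "N1 \<subseteq> K" unfolding N1_def by (rule msum_min[OF K_sub R_K mK_K])
  have RN1: "R \<subseteq> N1" unfolding N1_def by (rule msum_left[OF submodD(1)[OF mK_sub]])
  have mKN1: "mK \<subseteq> N1" unfolding N1_def by (rule msum_right[OF R0])
  have mKN1s: "mK \<subset> N1" using mKN1 RN1 R1 one_notin_mK by blast
  have fgK: "fin_gen R K" using frac_K unfolding frac_ideal_def by blast
  have "N1 \<noteq> K"
  proof
    assume "N1 = K"
    hence "K \<subseteq> msum R (setprod R m K)" unfolding N1_def mK_def by simp
    hence "K \<subseteq> R" using nakayama[OF fgK Rsubmod] by blast
    thus False using R_K K_ne_R by blast
  qed
  then obtain g where g: "g \<in> K" "g \<notin> N1" using N1K by blast
  define N2 where "N2 = msum N1 (smul g R)"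
  have sgR: "smul g R \<subseteq> K"
  proof
    fix x assume "x \<in> smul g R"
    then obtain r where "r \<in> R" "x = g * r" unfolding smul_def by blast
    thus "x \<in> K" using submodD_right[OF K_sub] g(1) by blast
  qed
  have gsR: "g \<in> smul g R" unfolding smul_def using R1 by force
  have subN2: "submod R N2" unfolding N2_def by (rule submod_msum[OF subN1 submod_smul[OF Rsubmod]])
  have N2K: "N2 \<subseteq> K" unfolding N2_def by (rule msum_min[OF K_sub N1K sgR])
  have N1N2: "N1 \<subseteq> N2" unfolding N2_def by (rule msum_left[OF submodD(1)[OF submod_smul[OF Rsubmod]]])
  have "g \<in> N2" unfolding N2_def using msum_right[OF submodD(1)[OF subN1]] gsR by blast
  hence N1N2s: "N1 \<subset> N2" using N1N2 g(2) by blast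
  have N2eq: "N2 = K"
  proof (rule ccontr)
    assume "N2 \<noteq> K"
    hence "N2 \<subset> K" using N2K by blast
    hence "3 \<le> len R mK K" using len_three[OF mK_sub subN1 subN2 K_sub mKN1s N1N2s] by blast
    thus False using len_mK by simp
  qed
  define P1 where "P1 = msum R (smul g R)"
  have subP1: "submod R P1" unfolding P1_def by (rule submod_msum[OF Rsubmod submod_smul[OF Rsubmod]])
  have P1K: "P1 \<subseteq> K" unfolding P1_def by (rule msum_min[OF K_sub R_K sgR])
  have "K \<subseteq> msum P1 (setprod R m K)"
  proof
    fix x assume "x \<in> K"
    hence "x \<in> N2" using N2eq by simp
    then obtain y s where ys: "y \<in> N1" "s \<in> smul g R" "x = y + s" unfolding N2_def msum_def by blast
    then obtain r z where rz: "r \<in> R" "z \<in> mK" "y = r + z" unfolding N1_def msum_def by blast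
    have "x = (r + s) + z" using ys rz by (simp add: algebra_simps)
    moreover have "r + s \<in> P1" unfolding P1_def msum_def using rz(1) ys(2) by blast
    ultimately show "x \<in> msum P1 (setprod R m K)" using rz(2) unfolding msum_def mK_def by blast
  qed
  hence "K \<subseteq> P1" using nakayama[OF fgK subP1] by blast
  hence "K = P1" using P1K by blast
  moreover have "g \<notin> R" using g(2) RN1 by blast
  ultimately show ?thesis using g(1) unfolding P1_def by blast
qed

end



primrec Pg :: "'a::comm_ring_1 set \<Rightarrow> 'a \<Rightarrow> nat \<Rightarrow> 'a set" where
  "Pg R g 0 = R"
| "Pg R g (Suc n) = msum R (smul g (Pg R g n))"

lemma setprod_smul: "setprod R (smul c X) (smul d Y) = smul (c * d) (setprod R X Y)"
proof -
  have "{x * y | x y. x \<in> smul c X \<and> y \<in> smul d Y} = smul (c * d) {x * y | x y. x \<in> X \<and> y \<in> Y}"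
    unfolding smul_def
  proof (rule set_eqI, rule iffI)
    fix z assume "z \<in> {x * y |x y. x \<in> (*) c ` X \<and> y \<in> (*) d ` Y}"
    then obtain x y where "x \<in> X" "y \<in> Y" "z = (c * x) * (d * y)" by blast
    moreover have "(c * x) * (d * y) = (c * d) * (x * y)" by (simp add: algebra_simps)
    ultimately show "z \<in> (*) (c * d) ` {x * y |x y. x \<in> X \<and> y \<in> Y}" by blast
  next
    fix z assume "z \<in> (*) (c * d) ` {x * y |x y. x \<in> X \<and> y \<in> Y}"
    then obtain x y where "x \<in> X" "y \<in> Y" "z = (c * d) * (x * y)" by blast
    moreover have "(c * x) * (d * y) = (c * d) * (x * y)" by (simp add: algebra_simps)
    moreover have "c * x \<in> (*) c ` X" "d * y \<in> (*) d ` Y" using \<open>x \<in> X\<close> \<open>y \<in> Y\<close> by auto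
    ultimately have "z = (c * x) * (d * y) \<and> c * x \<in> (*) c ` X \<and> d * y \<in> (*) d ` Y" by simp
    thus "z \<in> {x * y |x y. x \<in> (*) c ` X \<and> y \<in> (*) d ` Y}" by blast
  qed
  thus ?thesis unfolding setprod_def by (simp add: span_smul)
qed

locale gsetting = setting +
  fixes g
  assumes gK: "g \<in> K" and gR: "g \<notin> R" and Keq: "K = msum R (smul g R)"
begin

abbreviation "P \<equiv> Pg R g"

lemma P_sub: "submod R (P n)"
  by (induction n) (auto intro: Rsubmod submod_msum submod_smul)

lemma R_P: "R \<subseteq> P n"
proof (cases n)
  case 0 thus ?thesis by simp
next
  case (Suc k)
  thus ?thesis using msum_left[OF submodD(1)[OF submod_smul[OF P_sub]]] by simp
qed

lemma P_mono1: "P n \<subseteq> P (Suc n)"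
proof (induction n)
  case 0 thus ?case using R_P by (metis Pg.simps(1))
next
  case (Suc n)
  thus ?case using msum_mono[OF subset_refl smul_mono[OF Suc]] by simp
qed

lemma P_mono: "n \<le> k \<Longrightarrow> P n \<subseteq> P k"
proof (induction k)
  case 0 thus ?case by simp
next
  case (Suc k)
  thus ?case using P_mono1[of k] by (metis le_Suc_eq order.trans subset_refl)
qed

lemma P1: "P 1 = K" using Keq by simp

lemma gP: "p \<in> P n \<Longrightarrow> g * p \<in> P (Suc n)"
proof -
  assume "p \<in> P n"
  hence "g * p \<in> smul g (P n)" by (rule smul_mem)
  thus ?thesis using msum_right[OF R0] by auto
qed

lemma K_elem: "x \<in> K \<Longrightarrow> \<exists>r s. r \<in> R \<and> s \<in> R \<and> x = r + g * s"
  using Keq unfolding msum_def smul_def by blast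

lemma P_elem: "x \<in> P (Suc n) \<Longrightarrow> \<exists>r p. r \<in> R \<and> p \<in> P n \<and> x = r + g * p"
  unfolding Pg.simps msum_def smul_def by blast

lemma KP: assumes x: "x \<in> K" and p: "p \<in> P n" shows "x * p \<in> P (Suc n)"
proof -
  obtain r s where rs: "r \<in> R" "s \<in> R" "x = r + g * s" using K_elem[OF x] by blast
  have "x * p = r * p + g * (s * p)" using rs by (simp add: algebra_simps)
  moreover have "r * p \<in> P (Suc n)" using submodD(3)[OF P_sub rs(1) p] P_mono1 by blast
  moreover have "g * (s * p) \<in> P (Suc n)" using gP submodD(3)[OF P_sub rs(2) p] by blast
  ultimately show ?thesis using submodD(2)[OF P_sub[of "Suc n"]] by metis
qed

lemma PP: "p \<in> P i \<Longrightarrow> q \<in> P j \<Longrightarrow> p * q \<in> P (i + j)"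
proof (induction i arbitrary: p)
  case 0 thus ?case using submodD(3)[OF P_sub] by simp
next
  case (Suc i)
  obtain r p' where rp: "r \<in> R" "p' \<in> P i" "p = r + g * p'" using P_elem[OF Suc.prems(1)] by blast
  have "p * q = r * q + g * (p' * q)" using rp by (simp add: algebra_simps)
  moreover have "r * q \<in> P (Suc i + j)" using submodD(3)[OF P_sub rp(1) Suc.prems(2)] P_mono[of j "Suc i + j"] by auto
  moreover have "g * (p' * q) \<in> P (Suc i + j)" using gP[OF Suc.IH[OF rp(2) Suc.prems(2)]] by simp
  ultimately show ?case using submodD(2)[OF P_sub[of "Suc i + j"]] by metis
qed

lemma setprod_KP: "setprod R K (P n) = P (Suc n)"
proof
  show "setprod R K (P n) \<subseteq> P (Suc n)" by (rule setprod_min[OF P_sub]) (rule KP)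
  show "P (Suc n) \<subseteq> setprod R K (P n)"
  proof
    fix x assume "x \<in> P (Suc n)"
    then obtain r p where rp: "r \<in> R" "p \<in> P n" "x = r + g * p" using P_elem by blast
    have "r * 1 \<in> setprod R K (P n)" using setprod_mem[of r K 1 "P n" R] rp(1) R_K R_P R1 by blast
    moreover have "g * p \<in> setprod R K (P n)" using setprod_mem[OF gK rp(2)] .
    ultimately show "x \<in> setprod R K (P n)" using rp submodD(2)[OF submod_setprod] by simp
  qed
qed

lemma K2: "setprod R K K = P 2"
  using setprod_KP[of 1] P1 by (simp add: numeral_2_eq_2)

lemma I_smul: "I = smul a K"
  unfolding K_smul smul_smul using au by (simp add: smul_one)

lemma setprod_RX: "submod R X \<Longrightarrow> setprod R R X = X"
proof
  assume X: "submod R X"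
  show "setprod R R X \<subseteq> X" by (rule setprod_min[OF X]) (rule submodD(3)[OF X])
  show "X \<subseteq> setprod R R X"
  proof
    fix x assume "x \<in> X"
    hence "1 * x \<in> setprod R R X" using setprod_mem R1 by blast
    thus "x \<in> setprod R R X" by simp
  qed
qed

lemma mpow_eq: "mpow R I n = smul (a ^ n) (P n)"
proof (induction n)
  case 0 thus ?case by (simp add: smul_one)
next
  case (Suc n)
  have "mpow R I (Suc n) = setprod R (smul a K) (smul (a ^ n) (P n))" using Suc I_smul by simp
  also have "\<dots> = smul (a ^ Suc n) (P (Suc n))" by (simp add: setprod_smul setprod_KP)
  finally show ?case .
qed

lemma P_unit: "a ^ k * u ^ k = 1" using au by (metis power_mult_distrib power_one)

lemma red_P: "\<exists>N. P (Suc N) = P N"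
proof -
  obtain n where n: "mpow R I (Suc n) = setprod R (principal R a) (mpow R I n)"
    using red unfolding reduction_def by blast
  have pa: "principal R a = smul a R" unfolding principal_def smul_def by (auto simp: mult.commute)
  have "smul (a ^ Suc n) (P (Suc n)) = smul (a * a ^ n) (setprod R R (P n))"
    using n unfolding mpow_eq pa setprod_smul by simp
  hence "smul (a ^ Suc n) (P (Suc n)) = smul (a ^ Suc n) (P n)"
    using setprod_RX[OF P_sub] by simp
  hence "P (Suc n) = P n" using smul_inj[OF P_unit] by blast
  thus ?thesis by blast
qed

lemma P_stable: assumes "P (Suc N) = P N" shows "P (N + k) = P N"
proof (induction k)
  case 0 thus ?case by simp
next
  case (Suc k)
  have "P (N + Suc k) = msum R (smul g (P (N + k)))" by simp
  also have "\<dots> = P (Suc N)" using Suc by simp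
  finally show ?case using assms by simp
qed

lemma P_in_subring: assumes T: "subring T" "R \<union> K \<subseteq> T" shows "P n \<subseteq> T"
proof (induction n)
  case 0 thus ?case using T by simp
next
  case (Suc n)
  show ?case
  proof
    fix x assume "x \<in> P (Suc n)"
    then obtain r p where rp: "r \<in> R" "p \<in> P n" "x = r + g * p" using P_elem by blast
    have "g * p \<in> T" using subringD(4)[OF T(1)] gK T(2) Suc rp(2) by blast
    thus "x \<in> T" using subringD(3)[OF T(1)] rp T(2) by blast
  qed
qed

lemma S_eq: assumes N: "P (Suc N) = P N" shows "ring_gen R K = P N"
proof
  have PN: "P (N + N) = P N" using P_stable[OF N] .
  have "subring (P N)" unfolding subring_def
  proof (intro conjI ballI)
    show "0 \<in> P N" using R_P R0 by blast
    show "1 \<in> P N" using R_P R1 by blast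
    fix x y assume "x \<in> P N" "y \<in> P N"
    thus "x + y \<in> P N" using submodD(2)[OF P_sub] by blast
    show "x * y \<in> P N" using PP[OF \<open>x \<in> P N\<close> \<open>y \<in> P N\<close>] PN by simp
  next
    fix x assume "x \<in> P N" thus "- x \<in> P N" using submod_neg[OF Rsub P_sub] by blast
  qed
  moreover have "R \<union> K \<subseteq> P N"
  proof -
    have "K \<subseteq> P (N + 1)" using P1 P_mono[of 1 "N + 1"] by simp
    thus ?thesis using R_P P_stable[OF N, of 1] by simp
  qed
  ultimately show "ring_gen R K \<subseteq> P N" unfolding ring_gen_def by blast
  show "P N \<subseteq> ring_gen R K" unfolding ring_gen_def using P_in_subring by blast
qed

lemma frac_P: "frac_ideal R (P n)"
proof -
  have "fin_gen R (mpow R I n)" using noeth mpow_ideal unfolding ideal_of_def by blast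
  hence "fin_gen R (smul (u ^ n) (mpow R I n))" by (rule fin_gen_smul)
  moreover have "smul (u ^ n) (mpow R I n) = P n"
    unfolding mpow_eq using smul_unit_cancel[OF P_unit] by simp
  ultimately have "fin_gen R (P n)" by simp
  moreover have "regular (1::'a)" unfolding regular_def by simp
  moreover have "1 \<in> P n" using R_P R1 by blast
  ultimately show ?thesis using P_sub unfolding frac_ideal_def by blast
qed

lemma colon_K_P: "colon K (P (Suc j)) = colon R (P j)"
proof
  show "colon K (P (Suc j)) \<subseteq> colon R (P j)"
  proof
    fix z assume z: "z \<in> colon K (P (Suc j))"
    show "z \<in> colon R (P j)"
    proof (rule colon_memI)
      fix p assume p: "p \<in> P j"
      have "z * p \<in> colon K K"
      proof (rule colon_memI)
        fix k assume "k \<in> K"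
        hence "k * p \<in> P (Suc j)" using KP p by blast
        hence "z * (k * p) \<in> K" by (rule colon_memD[OF z])
        thus "z * p * k \<in> K" by (simp add: algebra_simps)
      qed
      thus "z * p \<in> R" using colon_KK by simp
    qed
  qed
  show "colon R (P j) \<subseteq> colon K (P (Suc j))"
  proof
    fix z assume z: "z \<in> colon R (P j)"
    show "z \<in> colon K (P (Suc j))"
    proof (rule colon_memI)
      fix x assume "x \<in> P (Suc j)"
      then obtain r p where rp: "r \<in> R" "p \<in> P j" "x = r + g * p" using P_elem by blast
      have "z * r \<in> R" using colon_memD[OF z] rp(1) R_P by blast
      moreover have "z * p \<in> R" using colon_memD[OF z rp(2)] .
      hence "g * (z * p) \<in> K" using submodD_right[OF K_sub _ gK] by blast
      ultimately have "z * r + g * (z * p) \<in> K" using R_K submodD(2)[OF K_sub] by blast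
      thus "z * x \<in> K" using rp by (simp add: algebra_simps)
    qed
  qed
qed

definition L0 where "L0 = colon R K"

lemma L0_char: "L0 = {s. s \<in> R \<and> g * s \<in> R}"
proof
  show "L0 \<subseteq> {s. s \<in> R \<and> g * s \<in> R}"
    unfolding L0_def using colon_memD one_K gK by (fastforce simp: mult.commute)
  show "{s. s \<in> R \<and> g * s \<in> R} \<subseteq> L0"
  proof
    fix s assume s: "s \<in> {s. s \<in> R \<and> g * s \<in> R}"
    show "s \<in> L0" unfolding L0_def
    proof (rule colon_memI)
      fix x assume "x \<in> K"
      then obtain r t where rt: "r \<in> R" "t \<in> R" "x = r + g * t" using K_elem by blast
      have "s * x = s * r + (g * s) * t" using rt by (simp add: algebra_simps)
      thus "s * x \<in> R" using s rt Rmul Radd by simp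
    qed
  qed
qed

lemma L0_sub: "submod R L0" unfolding L0_def by (rule submod_colon[OF Rsubmod])
lemma L0_R: "L0 \<subseteq> R" using L0_char by blast

lemma L0_diff: assumes "r1 \<in> R" "s1 \<in> R" "r2 \<in> R" "s2 \<in> R" "r1 + g * s1 = r2 + g * s2"
  shows "s1 - s2 \<in> L0"
proof -
  have "g * (s1 - s2) = r2 - r1" using assms(5) by (simp add: algebra_simps)
  moreover have "r2 - r1 \<in> R" using submod_diff[OF Rsub Rsubmod assms(3,1)] .
  moreover have "s1 - s2 \<in> R" using submod_diff[OF Rsub Rsubmod assms(2,4)] .
  ultimately show ?thesis unfolding L0_char by simp
qed

end



context gsetting begin

lemma Phi_sub: assumes L: "submod R L" shows "submod R {s. s \<in> R \<and> g * s \<in> L}"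
  unfolding submod_def
proof (intro conjI ballI)
  show "0 \<in> {s. s \<in> R \<and> g * s \<in> L}" using R0 submodD(1)[OF L] by simp
next
  fix x y assume "x \<in> {s. s \<in> R \<and> g * s \<in> L}" "y \<in> {s. s \<in> R \<and> g * s \<in> L}"
  hence "x \<in> R" "y \<in> R" "g * x \<in> L" "g * y \<in> L" by auto
  hence "x + y \<in> R" "g * x + g * y \<in> L" using Radd submodD(2)[OF L] by auto
  thus "x + y \<in> {s. s \<in> R \<and> g * s \<in> L}" by (simp add: distrib_left)
next
  fix r x assume "r \<in> R" "x \<in> {s. s \<in> R \<and> g * s \<in> L}"
  hence "r * x \<in> R" "r * (g * x) \<in> L" using Rmul submodD(3)[OF L] by auto
  thus "r * x \<in> {s. s \<in> R \<and> g * s \<in> L}" by (simp add: mult.left_commute)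
qed

lemma PsiPhi: assumes L: "submod R L" "R \<subseteq> L" "L \<subseteq> K"
  shows "msum R (smul g {s. s \<in> R \<and> g * s \<in> L}) = L"
proof
  show "msum R (smul g {s. s \<in> R \<and> g * s \<in> L}) \<subseteq> L"
  proof (rule msum_min[OF L(1) L(2)])
    show "smul g {s. s \<in> R \<and> g * s \<in> L} \<subseteq> L" unfolding smul_def by blast
  qed
  show "L \<subseteq> msum R (smul g {s. s \<in> R \<and> g * s \<in> L})"
  proof
    fix x assume x: "x \<in> L"
    then obtain r s where rs: "r \<in> R" "s \<in> R" "x = r + g * s" using K_elem L(3) by blast
    have "g * s = x - r" using rs by simp
    hence "g * s \<in> L" using submod_diff[OF Rsub L(1) x] rs(1) L(2) by auto
    hence "g * s \<in> smul g {s. s \<in> R \<and> g * s \<in> L}" using rs(2) unfolding smul_def by blast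
    thus "x \<in> msum R (smul g {s. s \<in> R \<and> g * s \<in> L})" using rs unfolding msum_def by blast
  qed
qed

lemma PhiPsi: assumes J: "submod R J" "L0 \<subseteq> J" "J \<subseteq> R"
  shows "{s. s \<in> R \<and> g * s \<in> msum R (smul g J)} = J"
proof
  show "J \<subseteq> {s. s \<in> R \<and> g * s \<in> msum R (smul g J)}"
  proof
    fix s assume s: "s \<in> J"
    have "g * s \<in> msum R (smul g J)" using msum_right[OF R0] smul_mem[OF s] by blast
    thus "s \<in> {s. s \<in> R \<and> g * s \<in> msum R (smul g J)}" using s J(3) by blast
  qed
  show "{s. s \<in> R \<and> g * s \<in> msum R (smul g J)} \<subseteq> J"
  proof
    fix s assume "s \<in> {s. s \<in> R \<and> g * s \<in> msum R (smul g J)}"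
    then obtain r j where h: "s \<in> R" "r \<in> R" "j \<in> J" "g * s = r + g * j"
      unfolding msum_def smul_def by blast
    have "0 + g * s = r + g * j" using h by simp
    hence "s - j \<in> L0" using L0_diff[OF R0 h(1) h(2)] h(3) J(3) by blast
    hence "s - j \<in> J" using J(2) by blast
    hence "(s - j) + j \<in> J" using submodD(2)[OF J(1)] h(3) by blast
    thus "s \<in> J" by simp
  qed
qed

lemma len_KR: "len R R K = len R L0 R"
proof (rule antisym)
  show "len R R K \<le> len R L0 R"
  proof (rule len_transfer[where \<Phi>="\<lambda>L. {s. s \<in> R \<and> g * s \<in> L}"])
    fix L assume "submod R L" thus "submod R {s. s \<in> R \<and> g * s \<in> L}" by (rule Phi_sub)
  next
    fix L L' assume L: "submod R L" "R \<subseteq> L" "L \<subseteq> K" and L': "submod R L'" "R \<subseteq> L'" "L' \<subseteq> K"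
      and LL: "L \<subset> L'"
    have "{s. s \<in> R \<and> g * s \<in> L} \<subseteq> {s. s \<in> R \<and> g * s \<in> L'}" using LL by blast
    moreover have "{s. s \<in> R \<and> g * s \<in> L} \<noteq> {s. s \<in> R \<and> g * s \<in> L'}"
    proof
      assume eq: "{s. s \<in> R \<and> g * s \<in> L} = {s. s \<in> R \<and> g * s \<in> L'}"
      have "L = msum R (smul g {s. s \<in> R \<and> g * s \<in> L})" using PsiPhi[OF L] by simp
      also have "\<dots> = msum R (smul g {s. s \<in> R \<and> g * s \<in> L'})" using eq by simp
      also have "\<dots> = L'" using PsiPhi[OF L'] by simp
      finally show False using LL by blast
    qed
    ultimately show "{s. s \<in> R \<and> g * s \<in> L} \<subset> {s. s \<in> R \<and> g * s \<in> L'}" by blast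
  next
    show "{s. s \<in> R \<and> g * s \<in> R} = L0" using L0_char by simp
  next
    show "{s. s \<in> R \<and> g * s \<in> K} = R" using submodD_right[OF K_sub _ gK] by (auto simp: mult.commute)
  qed
  show "len R L0 R \<le> len R R K"
  proof (rule len_transfer[where \<Phi>="\<lambda>J. msum R (smul g J)"])
    fix J assume "submod R J" thus "submod R (msum R (smul g J))"
      by (rule submod_msum[OF Rsubmod submod_smul])
  next
    fix J J' assume J: "submod R J" "L0 \<subseteq> J" "J \<subseteq> R" and J': "submod R J'" "L0 \<subseteq> J'" "J' \<subseteq> R"
      and JJ: "J \<subset> J'"
    have "msum R (smul g J) \<subseteq> msum R (smul g J')" using msum_mono[OF subset_refl smul_mono] JJ by blast
    moreover have "msum R (smul g J) \<noteq> msum R (smul g J')"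
    proof
      assume eq: "msum R (smul g J) = msum R (smul g J')"
      have "J = {s. s \<in> R \<and> g * s \<in> msum R (smul g J)}" using PhiPsi[OF J] by simp
      also have "\<dots> = {s. s \<in> R \<and> g * s \<in> msum R (smul g J')}" using eq by simp
      also have "\<dots> = J'" using PhiPsi[OF J'] by simp
      finally show False using JJ by blast
    qed
    ultimately show "msum R (smul g J) \<subset> msum R (smul g J')" by blast
  next
    show "msum R (smul g L0) = R"
    proof
      show "msum R (smul g L0) \<subseteq> R"
      proof (rule msum_min[OF Rsubmod subset_refl])
        show "smul g L0 \<subseteq> R" unfolding smul_def L0_char by blast
      qed
      show "R \<subseteq> msum R (smul g L0)" by (rule msum_left[OF submodD(1)[OF submod_smul[OF L0_sub]]])
    qed
  next
    show "msum R (smul g R) = K" using Keq by simp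
  qed
qed

definition f where "f x = (SOME s. s \<in> R \<and> (\<exists>r\<in>R. x = r + g * s))"

lemma f_spec: assumes "x \<in> K" shows "f x \<in> R" "\<exists>r\<in>R. x = r + g * f x"
proof -
  have "\<exists>s. s \<in> R \<and> (\<exists>r\<in>R. x = r + g * s)" using K_elem[OF assms] by blast
  hence "f x \<in> R \<and> (\<exists>r\<in>R. x = r + g * f x)" unfolding f_def by (rule someI_ex)
  thus "f x \<in> R" "\<exists>r\<in>R. x = r + g * f x" by auto
qed

lemma f_rep: assumes "x \<in> K" "r \<in> R" "s \<in> R" "x = r + g * s" shows "s - f x \<in> L0"
proof -
  obtain r' where r': "r' \<in> R" "x = r' + g * f x" using f_spec(2)[OF assms(1)] by blast
  show ?thesis using L0_diff[OF assms(2,3) r'(1) f_spec(1)[OF assms(1)]] assms(4) r'(2) by simp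
qed

lemma quot_iso_L0: "quot_iso R K R R L0"
  unfolding quot_iso_def
proof (rule exI[of _ f], intro conjI ballI)
  fix x assume "x \<in> K" thus "f x \<in> R" by (rule f_spec)
next
  fix x y assume x: "x \<in> K" and y: "y \<in> K"
  obtain rx where rx: "rx \<in> R" "x = rx + g * f x" using f_spec(2)[OF x] by blast
  obtain ry where ry: "ry \<in> R" "y = ry + g * f y" using f_spec(2)[OF y] by blast
  have xy: "x + y \<in> K" using submodD(2)[OF K_sub x y] .
  have "x + y = (rx + g * f x) + (ry + g * f y)" using rx(2) ry(2) by (rule arg_cong2[where f="(+)"])
  also have "\<dots> = (rx + ry) + g * (f x + f y)" by (simp add: algebra_simps)
  finally have "x + y = (rx + ry) + g * (f x + f y)" .
  hence "(f x + f y) - f (x + y) \<in> L0"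
    using f_rep[OF xy Radd[OF rx(1) ry(1)] Radd[OF f_spec(1)[OF x] f_spec(1)[OF y]]] by blast
  hence "- ((f x + f y) - f (x + y)) \<in> L0" by (rule submod_neg[OF Rsub L0_sub])
  thus "f (x + y) - f x - f y \<in> L0" by (simp add: algebra_simps)
next
  fix r x assume r: "r \<in> R" and x: "x \<in> K"
  obtain rx where rx: "rx \<in> R" "x = rx + g * f x" using f_spec(2)[OF x] by blast
  have rxK: "r * x \<in> K" using submodD(3)[OF K_sub r x] .
  have "r * x = r * (rx + g * f x)" using rx(2) by (rule arg_cong)
  also have "\<dots> = (r * rx) + g * (r * f x)" by (simp add: algebra_simps)
  finally have "r * x = (r * rx) + g * (r * f x)" .
  hence "r * f x - f (r * x) \<in> L0"
    using f_rep[OF rxK Rmul[OF r rx(1)] Rmul[OF r f_spec(1)[OF x]]] by blast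
  hence "- (r * f x - f (r * x)) \<in> L0" by (rule submod_neg[OF Rsub L0_sub])
  thus "f (r * x) - r * f x \<in> L0" by (simp add: algebra_simps)
next
  fix z assume z: "z \<in> R"
  have gz: "g * z \<in> K" using submodD_right[OF K_sub z gK] by (simp add: mult.commute)
  have "z - f (g * z) \<in> L0" using f_rep[OF gz R0 z] by simp
  thus "\<exists>x\<in>K. z - f x \<in> L0" using gz by blast
next
  fix x assume x: "x \<in> K"
  show "f x \<in> L0 \<longleftrightarrow> x \<in> R"
  proof
    assume "f x \<in> L0"
    hence "g * f x \<in> R" unfolding L0_char by blast
    moreover obtain r where "r \<in> R" "x = r + g * f x" using f_spec(2)[OF x] by blast
    ultimately show "x \<in> R" using Radd by metis
  next
    assume "x \<in> R"
    hence "0 - f x \<in> L0" using f_rep[OF x \<open>x \<in> R\<close> R0] by simp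
    hence "- (0 - f x) \<in> L0" by (rule submod_neg[OF Rsub L0_sub])
    thus "f x \<in> L0" by simp
  qed
qed

end



context gsetting begin

lemma main:
  shows "(two_AGL R I a \<longleftrightarrow> (colon R (ring_gen R K) = colon R K \<and> len R R K = 2))
    \<and> (two_AGL R I a \<longleftrightarrow> (ring_gen R K = setprod R K K \<and> len R R K = 2))
    \<and> (two_AGL R I a \<longrightarrow> quot_iso R K R R (colon R (ring_gen R K)))"
proof -
  obtain N where N: "P (Suc N) = P N" using red_P by blast
  define S where "S = ring_gen R K"
  define c where "c = colon R S"
  have two: "(2::nat) = Suc 1" "(3::nat) = Suc 2" by simp_all
  have SP: "S = P N" unfolding S_def by (rule S_eq[OF N])
  have Sfrac: "frac_ideal R S" unfolding SP by (rule frac_P)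
  have KS: "K \<subseteq> S"
  proof -
    have "P 1 \<subseteq> P (N + 1)" by (rule P_mono) simp
    thus ?thesis using P1 P_stable[OF N, of 1] SP by simp
  qed
  have cK: "colon K S = c"
  proof -
    have "colon K S = colon K (P (Suc N))" using SP N by simp
    also have "\<dots> = colon R (P N)" by (rule colon_K_P)
    finally show ?thesis unfolding c_def SP .
  qed
  have L02: "colon K (P 2) = L0"
    unfolding two(1) colon_K_P L0_def P1 ..
  have T: "two_AGL R I a \<longleftrightarrow> len R K S = 2"
    unfolding two_AGL_def S_def K_def ..
  have lenKS: "len R K S = len R c R"
    using dual_len[OF canon_K Sfrac frac_K KS] colon_KK cK by simp
  have c_L0_iff: "c = L0 \<longleftrightarrow> S = P 2"
  proof
    assume "S = P 2" thus "c = L0" using cK L02 by simp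
  next
    assume "c = L0"
    hence "colon K S = colon K (P 2)" using cK L02 by simp
    hence "colon K (colon K S) = colon K (colon K (P 2))" by simp
    thus "S = P 2" using K_inv[OF Sfrac] K_inv[OF frac_P] by simp
  qed
  have c_sub: "submod R c" unfolding c_def by (rule submod_colon[OF Rsubmod])
  have cL0: "c \<subseteq> L0" unfolding c_def L0_def by (rule colon_anti[OF KS])
  have L0m: "L0 \<subseteq> m"
  proof (rule m_max)
    show "ideal_of R L0" unfolding ideal_of_def using L0_sub L0_R by blast
    show "L0 \<noteq> R"
    proof
      assume "L0 = R"
      hence "g * 1 \<in> R" using R1 unfolding L0_char by blast
      thus False using gR by simp
    qed
  qed
  have one_dir: "c = L0" if len2: "len R c R = 2"
  proof (rule ccontr)
    assume ne: "c \<noteq> L0"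
    have L0_eq: "L0 = m"
    proof (rule ccontr)
      assume "L0 \<noteq> m"
      hence "3 \<le> len R c R"
        using len_three[OF c_sub L0_sub m_sub Rsubmod] cL0 ne L0m m_R m_ne by blast
      thus False using len2 by simp
    qed
    show False
    proof (cases "\<exists>x\<in>m. g * x \<notin> m")
      case True
      then obtain x where x: "x \<in> m" "g * x \<notin> m" by blast
      have xR: "x \<in> R" using x(1) m_R by blast
      have gxR: "g * x \<in> R" using x(1) L0_eq unfolding L0_char by blast
      obtain v where v: "v \<in> R" "v * (g * x) = 1" using unit_notin_m[OF gxR x(2)] by blast
      have vx: "v * x \<in> R" using Rmul v(1) xR by blast
      have "K = smul g R"
      proof
        show "smul g R \<subseteq> K" unfolding smul_def using submodD_right[OF K_sub _ gK] by auto
        show "K \<subseteq> smul g R"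
        proof
          fix y assume "y \<in> K"
          then obtain r s where rs: "r \<in> R" "s \<in> R" "y = r + g * s" using K_elem by blast
          have "g * (r * (v * x) + s) = r * (v * (g * x)) + g * s" by (simp add: algebra_simps)
          hence "y = g * (r * (v * x) + s)" using rs v(2) by simp
          moreover have "r * (v * x) + s \<in> R" using Rmul Radd rs vx by blast
          ultimately show "y \<in> smul g R" unfolding smul_def by blast
        qed
      qed
      moreover have "g * (v * x) = 1" using v(2) by (simp add: algebra_simps)
      ultimately show False using K_not_principal by blast
    next
      case False
      hence gm: "\<forall>x\<in>m. g * x \<in> m" by blast
      have cP2: "colon R (P 2) = m"
      proof
        have "colon R (P 2) \<subseteq> colon R (P 1)" by (rule colon_anti[OF P_mono]) simp
        thus "colon R (P 2) \<subseteq> m" using P1 L0_eq unfolding L0_def by simp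
        show "m \<subseteq> colon R (P 2)"
        proof
          fix z assume z: "z \<in> m"
          show "z \<in> colon R (P 2)"
          proof (rule colon_memI)
            fix x assume "x \<in> P 2"
            then obtain r p where rp: "r \<in> R" "p \<in> P 1" "x = r + g * p" using P_elem unfolding two(1) by blast
            have "g * z \<in> colon R K" using gm z L0_eq unfolding L0_def by blast
            hence "(g * z) * p \<in> R" using colon_memD rp(2) P1 by blast
            moreover have "z * r \<in> R" using Rmul z m_R rp(1) by blast
            moreover have "z * x = z * r + (g * z) * p" using rp(3) by (simp add: algebra_simps)
            ultimately show "z * x \<in> R" using Radd by simp
          qed
        qed
      qed
      have "len R (P 2) (P 3) = len R (colon K (P 3)) (colon K (P 2))"
        by (rule dual_len[OF canon_K frac_P frac_P P_mono]) simp
      also have "\<dots> = len R (colon R (P 2)) (colon R (P 1))"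
        unfolding two colon_K_P ..
      also have "\<dots> = 0" using cP2 P1 L0_eq len_refl unfolding L0_def by simp
      finally have l0: "len R (P 2) (P 3) = 0" .
      have "P 3 = P 2"
      proof (rule ccontr)
        assume "P 3 \<noteq> P 2"
        moreover have "P 2 \<subseteq> P 3" by (rule P_mono) simp
        ultimately have "1 \<le> len R (P 2) (P 3)" using len_pos[OF P_sub P_sub] by blast
        thus False using l0 by simp
      qed
      hence "P (Suc 2) = P 2" using two(2) by metis
      hence "S = P 2" unfolding S_def by (rule S_eq)
      thus False using c_L0_iff ne by simp
    qed
  qed
  have lenKR: "len R R K = len R L0 R" by (rule len_KR)
  have conj1: "two_AGL R I a \<longleftrightarrow> (c = L0 \<and> len R R K = 2)"
  proof
    assume "two_AGL R I a"
    hence l: "len R c R = 2" using T lenKS by simp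
    hence "c = L0" by (rule one_dir)
    thus "c = L0 \<and> len R R K = 2" using l lenKR by simp
  next
    assume "c = L0 \<and> len R R K = 2"
    thus "two_AGL R I a" using T lenKS lenKR by simp
  qed
  have conj2: "two_AGL R I a \<longleftrightarrow> (S = setprod R K K \<and> len R R K = 2)"
    using conj1 c_L0_iff K2 by simp
  have conj3: "two_AGL R I a \<longrightarrow> quot_iso R K R R c"
    using conj1 quot_iso_L0 by simp
  show ?thesis using conj1 conj2 conj3 unfolding c_def S_def L0_def by blast
qed

end

theorem proposition3p7:
  fixes R m I :: "'a::comm_ring_1 set" and a :: 'a
  assumes "cm1_local R m"
    and "ideal_of R I" and "I \<noteq> R"
    and "canonical_frac_ideal R I"
    and "parameter R m a" and "reduction R a I"
    and "cm_type R m 2"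
  defines "K \<equiv> frac_div I a"
  defines "S \<equiv> ring_gen R K"
  defines "c \<equiv> colon R S"
  shows "(two_AGL R I a \<longleftrightarrow> (c = colon R K \<and> len R R K = 2))
    \<and> (two_AGL R I a \<longleftrightarrow> (S = setprod R K K \<and> len R R K = 2))
    \<and> (two_AGL R I a \<longrightarrow> quot_iso R K R R c)"
proof -
  have st: "setting R m I a" unfolding setting_def using assms(1-7) by blast
  interpret st: setting R m I a by (rule st)
  obtain g where g: "g \<in> st.K" "g \<notin> R" "st.K = msum R (smul g R)" using st.K_structure by blast
  have gs: "gsetting R m I a g" unfolding gsetting_def gsetting_axioms_def using st g by blast
  interpret gs: gsetting R m I a g by (rule gs)
  have KK: "K = st.K" unfolding K_def st.K_def ..
  show ?thesis using gs.main unfolding c_def S_def KK .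
qed

end
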